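(* Let $0\le r<n$. If all eigenvalues of the random-to-random shuffle element $\upsilon_r\in\mathbb{C}S_r$ (acting, e.g., by left multiplication on $\mathbb{C}S_r$) are integers, then all eigenvalues of the Laplacian $\Lambda_r$ on $M_r$ are integers.
   Context: $\upsilon_r=r\cdot\mathrm{id}+\sum_{u<v}(v,u,u+1,\dots,v-1)+\sum_{u>v}(v,u,u-1,\dots,v+1)\in\mathbb{C}S_r$ (cycle notation); acting on words by permuting positions it sends $w$ to $\sum_{u,v=1}^r w^{(u\to v)}$, where $w^{(u\to v)}$ removes the letter in position $u$ and reinserts it at position $v$. $M_r$ ($0\le r\le n$) is the complex vector space with orthonormal basis the injective words of length $r$ on $\{1,\dots,n\}$, with boundary $\partial_r(a_1\cdots a_r)=\sum_{j=1}^r(-1)^{j-1}a_1\cdots\widehat{a_j}\cdots a_r$; $\delta_r$ is the adjoint of $\partial_{r+1}$ and $\Lambda_r=\delta_{r-1}\partial_r+\partial_{r+1}\delta_r$. *)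

theory Defs
  imports Complex_Main
begin

text \<open>Injective words of length r on the alphabet {1..n}; they form the
  orthonormal basis of M_r. Vectors of M_r are represented as complex-valued
  functions on words vanishing outside this basis set (coefficient functions).\<close>

definition inj_words :: "nat \<Rightarrow> nat \<Rightarrow> nat list set" where
  "inj_words n r = {w. length w = r \<and> distinct w \<and> set w \<subseteq> {1..n}}"

definition del_pos :: "nat \<Rightarrow> 'a list \<Rightarrow> 'a list" where
  "del_pos j w = take j w @ drop (Suc j) w"

text \<open>Coefficient of the word u in the boundary of the word w:
  d(a_1...a_r) = sum_{j=1}^r (-1)^(j-1) a_1..^a_j..a_r  (here with 0-indexed j).\<close>
definition bd_coeff :: "nat list \<Rightarrow> nat list \<Rightarrow> complex" where
  "bd_coeff w u = (\<Sum>j<length w. if del_pos j w = u then (-1) ^ j else 0)"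

definition bd :: "nat \<Rightarrow> nat \<Rightarrow> (nat list \<Rightarrow> complex) \<Rightarrow> (nat list \<Rightarrow> complex)" where
  "bd n r f = (\<lambda>u. if r \<ge> 1 \<and> u \<in> inj_words n (r - 1)
                 then (\<Sum>w\<in>inj_words n r. bd_coeff w u * f w) else 0)"

text \<open>\<delta>_r : M_r \<rightarrow> M_(r+1), the adjoint of \<partial>_(r+1) w.r.t. the orthonormal word basis.\<close>
definition cobd :: "nat \<Rightarrow> nat \<Rightarrow> (nat list \<Rightarrow> complex) \<Rightarrow> (nat list \<Rightarrow> complex)" where
  "cobd n r g = (\<lambda>w. if w \<in> inj_words n (Suc r)
                 then (\<Sum>u\<in>inj_words n r. cnj (bd_coeff w u) * g u) else 0)"

text \<open>Laplacian \<Lambda>_r = \<delta>_(r-1) \<partial>_r + \<partial>_(r+1) \<delta>_r on M_r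
  (for r = 0 the first summand is absent, since \<partial>_0 = 0).\<close>
definition laplacian :: "nat \<Rightarrow> nat \<Rightarrow> (nat list \<Rightarrow> complex) \<Rightarrow> (nat list \<Rightarrow> complex)" where
  "laplacian n r f = (\<lambda>w.
     (if r = 0 then 0 else cobd n (r - 1) (bd n r f) w) + bd n (Suc r) (cobd n r f) w)"

definition move_letter :: "nat \<Rightarrow> nat \<Rightarrow> 'a list \<Rightarrow> 'a list" where
  "move_letter u v w = (let w' = del_pos u w in take v w' @ (w ! u) # drop v w')"

text \<open>The random-to-random element \<upsilon>_r acting on \<complex>S_r, where S_r is identified with
  the injective words of length r on {1..r} (one-line notation) and \<upsilon>_r acts by
  permuting positions: w \<mapsto> \<Sum>_(u,v) w^(u\<rightarrow>v).\<close>
definition upsilon_op :: "nat \<Rightarrow> (nat list \<Rightarrow> complex) \<Rightarrow> (nat list \<Rightarrow> complex)" where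
  "upsilon_op r f = (\<lambda>x. if x \<in> inj_words r r then
      (\<Sum>w\<in>inj_words r r. (\<Sum>u<r. \<Sum>v<r. if move_letter u v w = x then f w else 0))
     else 0)"

definition is_eigenvalue :: "'a set \<Rightarrow> (('a \<Rightarrow> complex) \<Rightarrow> ('a \<Rightarrow> complex)) \<Rightarrow> complex \<Rightarrow> bool" where
  "is_eigenvalue B T c \<longleftrightarrow>
     (\<exists>f. (\<forall>x. x \<notin> B \<longrightarrow> f x = 0) \<and> f \<noteq> (\<lambda>_. 0) \<and> T f = (\<lambda>x. c * f x))"

end

theory Submission
  imports Defs "HOL-Computational_Algebra.Fundamental_Theorem_Algebra"
begin

definition supp :: "'a set \<Rightarrow> ('a \<Rightarrow> complex) \<Rightarrow> bool" where
  "supp B f \<longleftrightarrow> (\<forall>x. x \<notin> B \<longrightarrow> f x = 0)"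

definition lin :: "(('a \<Rightarrow> complex) \<Rightarrow> ('a \<Rightarrow> complex)) \<Rightarrow> bool" where
  "lin Y \<longleftrightarrow> (\<forall>f g. Y (\<lambda>x. f x + g x) = (\<lambda>x. Y f x + Y g x)) \<and> (\<forall>c f. Y (\<lambda>x. c * f x) = (\<lambda>x. c * Y f x))"

lemma lin_add: "lin Y \<Longrightarrow> Y (\<lambda>x. f x + g x) = (\<lambda>x. Y f x + Y g x)"
  unfolding lin_def by blast

lemma lin_smult: "lin Y \<Longrightarrow> Y (\<lambda>x. c * f x) = (\<lambda>x. c * Y f x)"
  unfolding lin_def by blast

lemma lin_zero: "lin Y \<Longrightarrow> Y (\<lambda>x. 0) = (\<lambda>x. 0)"
  using lin_smult[of Y 0 "\<lambda>x. 0"] by simp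

lemma lin_sum: 
  assumes "lin Y" "finite J"
  shows "Y (\<lambda>x. \<Sum>j\<in>J. c j * g j x) = (\<lambda>x. \<Sum>j\<in>J. c j * Y (g j) x)"
  using assms(2)
proof (induction J rule: finite_induct)
  case empty
  then show ?case using lin_zero[OF assms(1)] by simp
next
  case (insert a F)
  have "Y (\<lambda>x. \<Sum>j\<in>insert a F. c j * g j x) = Y (\<lambda>x. c a * g a x + (\<Sum>j\<in>F. c j * g j x))"
    using insert by simp
  also have "\<dots> = (\<lambda>x. c a * Y (g a) x + Y (\<lambda>x. \<Sum>j\<in>F. c j * g j x) x)"
    using lin_add[OF assms(1)] lin_smult[OF assms(1)] by simp
  finally show ?case using insert by simp
qed

lemma lin_diff: "lin Y \<Longrightarrow> Y (\<lambda>x. f x - g x) = (\<lambda>x. Y f x - Y g x)"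
proof -
  assume l: "lin Y"
  have "Y (\<lambda>x. f x - g x) = Y (\<lambda>x. f x + (-1) * g x)" by simp
  also have "\<dots> = (\<lambda>x. Y f x + Y (\<lambda>x. (-1) * g x) x)" using lin_add[OF l, of f "\<lambda>x. (-1) * g x"] by simp
  also have "\<dots> = (\<lambda>x. Y f x - Y g x)" using lin_smult[OF l, of "-1" g] by simp
  finally show ?thesis .
qed

lemma dependent_supp:
  assumes "finite B"
  shows "finite J \<Longrightarrow> card B < card J \<Longrightarrow> (\<forall>j\<in>J. supp B (fs j)) \<Longrightarrow>
     \<exists>c. (\<exists>j\<in>J. c j \<noteq> 0) \<and> (\<forall>x. (\<Sum>j\<in>J. c j * fs j x) = 0)"
  using assms
proof (induction B arbitrary: J fs rule: finite_induct)
  case empty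
  then obtain j where "j \<in> J" by fastforce
  have "\<forall>x. (\<Sum>j\<in>J. 1 * fs j x) = 0" using empty by (simp add: supp_def)
  then show ?case using \<open>j \<in> J\<close> by (intro exI[of _ "\<lambda>_. 1"]) auto
next
  case (insert b B)
  show ?case
  proof (cases "\<forall>j\<in>J. fs j b = 0")
    case True
    have "\<forall>j\<in>J. supp B (fs j)"
    proof (intro ballI)
      fix j assume "j \<in> J"
      then show "supp B (fs j)" using insert.prems True unfolding supp_def
        by (metis insert_iff)
    qed
    moreover have "card B < card J" using insert by simp
    ultimately show ?thesis using insert.IH insert.prems by blast
  next
    case False
    then obtain k where k: "k \<in> J" "fs k b \<noteq> 0" by blast
    define gs where "gs j = (\<lambda>x. fs j x - (fs j b / fs k b) * fs k x)" for j
    have "\<forall>j\<in>J - {k}. supp B (gs j)"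
    proof (intro ballI)
      fix j assume j: "j \<in> J - {k}"
      show "supp B (gs j)" unfolding supp_def
      proof (intro allI impI)
        fix x assume "x \<notin> B"
        show "gs j x = 0"
        proof (cases "x = b")
          case True then show ?thesis using k by (simp add: gs_def)
        next
          case False then show ?thesis using insert.prems k j \<open>x \<notin> B\<close> by (simp add: gs_def supp_def)
        qed
      qed
    qed
    moreover have "card B < card (J - {k})" using insert k by simp
    moreover have "finite (J - {k})" using insert by simp
    ultimately obtain d where d: "\<exists>j\<in>J - {k}. d j \<noteq> 0" "\<forall>x. (\<Sum>j\<in>J - {k}. d j * gs j x) = 0"
      using insert.IH by blast
    define c where "c j = (if j = k then - (\<Sum>i\<in>J - {k}. d i * fs i b) / fs k b else d j)" for j
    have "\<exists>j\<in>J. c j \<noteq> 0" using d(1) unfolding c_def by auto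
    moreover have "(\<Sum>j\<in>J. c j * fs j x) = 0" for x
    proof -
      have "(\<Sum>j\<in>J. c j * fs j x) = c k * fs k x + (\<Sum>j\<in>J - {k}. c j * fs j x)"
        using k insert.prems(1) by (simp add: sum.remove)
      also have "(\<Sum>j\<in>J - {k}. c j * fs j x) = (\<Sum>j\<in>J - {k}. d j * fs j x)"
        unfolding c_def by (rule sum.cong) auto
      also have "\<dots> = (\<Sum>j\<in>J - {k}. d j * gs j x + d j * fs j b / fs k b * fs k x)"
        unfolding gs_def by (rule sum.cong) (auto simp: algebra_simps)
      also have "\<dots> = (\<Sum>j\<in>J - {k}. d j * gs j x) + (\<Sum>j\<in>J - {k}. d j * fs j b) / fs k b * fs k x"
        by (simp add: sum.distrib sum_distrib_right sum_divide_distrib)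
      finally show ?thesis using d(2) unfolding c_def by simp
    qed
    ultimately show ?thesis by blast
  qed
qed

definition polyop :: "(('a \<Rightarrow> complex) \<Rightarrow> ('a \<Rightarrow> complex)) \<Rightarrow> complex poly \<Rightarrow> ('a \<Rightarrow> complex) \<Rightarrow> 'a \<Rightarrow> complex" where
  "polyop Y p f = (\<lambda>x. \<Sum>j\<le>degree p. coeff p j * (Y ^^ j) f x)"

lemma polyop_bound:
  assumes "degree p \<le> N"
  shows "polyop Y p f = (\<lambda>x. \<Sum>j\<le>N. coeff p j * (Y ^^ j) f x)"
proof -
  have "(\<Sum>j\<le>N. coeff p j * (Y ^^ j) f x) = (\<Sum>j\<le>degree p. coeff p j * (Y ^^ j) f x)" for x
    using assms by (intro sum.mono_neutral_right) (auto simp: coeff_eq_0)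
  then show ?thesis unfolding polyop_def by simp
qed

lemma polyop_linfactor:
  assumes "lin Y"
  shows "polyop Y ([:-z, 1:] * q) f = (\<lambda>x. Y (polyop Y q f) x - z * polyop Y q f x)"
proof -
  define N where "N = degree q"
  have d: "degree ([:-z, 1:] * q) \<le> Suc N"
    unfolding N_def by (metis degree_linear_power le_refl power_one_right degree_mult_le add.commute
        plus_1_eq_Suc order_trans)
  have e: "[:-z, 1:] * q = smult (-z) q + pCons 0 q" by simp
  have "polyop Y ([:-z, 1:] * q) f = (\<lambda>x. \<Sum>j\<le>Suc N. coeff ([:-z, 1:] * q) j * (Y ^^ j) f x)"
    by (rule polyop_bound[OF d])
  also have "\<dots> = (\<lambda>x. (\<Sum>j\<le>Suc N. coeff (pCons 0 q) j * (Y ^^ j) f x)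
                     - z * (\<Sum>j\<le>Suc N. coeff q j * (Y ^^ j) f x))"
    unfolding e by (simp add: algebra_simps sum.distrib sum_distrib_left sum_subtractf)
  also have "(\<lambda>x. \<Sum>j\<le>Suc N. coeff q j * (Y ^^ j) f x) = polyop Y q f"
    by (rule polyop_bound[symmetric]) (simp add: N_def)
  also have "(\<lambda>x. \<Sum>j\<le>Suc N. coeff (pCons 0 q) j * (Y ^^ j) f x)
       = (\<lambda>x. \<Sum>j\<le>N. coeff q j * Y ((Y ^^ j) f) x)"
    by (simp add: sum.atMost_Suc_shift del: sum.atMost_Suc)
  also have "\<dots> = Y (\<lambda>x. \<Sum>j\<le>N. coeff q j * (Y ^^ j) f x)"
    by (rule lin_sum[OF assms, symmetric]) simp
  also have "(\<lambda>x. \<Sum>j\<le>N. coeff q j * (Y ^^ j) f x) = polyop Y q f"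
    by (rule polyop_bound[symmetric]) (simp add: N_def)
  finally show ?thesis .
qed

lemma common_eig:
  fixes Y Z :: "('a \<Rightarrow> complex) \<Rightarrow> 'a \<Rightarrow> complex"
  assumes B: "finite B" and lY: "lin Y" and lZ: "lin Z"
    and Ys: "\<And>f. supp B f \<Longrightarrow> supp B (Y f)"
    and YZ: "\<And>f. supp B f \<Longrightarrow> Y (Z f) = Z (Y f)"
    and v: "supp B v" "v \<noteq> (\<lambda>_. 0)" "Z v = (\<lambda>x. b * v x)"
  shows "\<exists>w a. supp B w \<and> w \<noteq> (\<lambda>_. 0) \<and> Z w = (\<lambda>x. b * w x) \<and> Y w = (\<lambda>x. a * w x)"
proof -
  define E where "E f \<longleftrightarrow> supp B f \<and> Z f = (\<lambda>x. b * f x)" for f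
  have E0: "E (\<lambda>x. 0)" unfolding E_def supp_def using lin_zero[OF lZ] by simp
  have Eadd: "E (\<lambda>x. f x + g x)" if "E f" "E g" for f g
    using that lin_add[OF lZ, of f g] unfolding E_def supp_def by (auto simp: algebra_simps)
  have Esm: "E (\<lambda>x. c * f x)" if "E f" for c f
    using that lin_smult[OF lZ, of c f] unfolding E_def supp_def by (auto simp: algebra_simps)
  have EY: "E (Y f)" if "E f" for f
  proof -
    have "Z (Y f) = Y (Z f)" using YZ that unfolding E_def by metis
    also have "\<dots> = (\<lambda>x. b * Y f x)" using that lin_smult[OF lY, of b f] unfolding E_def by simp
    finally show ?thesis using Ys that unfolding E_def by simp
  qed
  have Epow: "E ((Y ^^ j) f)" if "E f" for j f
    using that by (induction j) (auto intro: EY)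
  have Esum: "E (\<lambda>x. \<Sum>j\<in>J. c j * g j x)" if "finite J" "\<forall>j\<in>J. E (g j)" for J c g
    using that
  proof (induction J rule: finite_induct)
    case empty then show ?case using E0 by simp
  next
    case (insert a F)
    then show ?case using Eadd[OF Esm[of "g a" "c a"], of "\<lambda>x. \<Sum>j\<in>F. c j * g j x"] by simp
  qed
  have Epoly: "E (polyop Y p f)" if "E f" for p f
    unfolding polyop_def by (rule Esum) (auto intro: Epow that)
  have chain: "\<And>p f. p \<noteq> 0 \<Longrightarrow> E f \<Longrightarrow> f \<noteq> (\<lambda>_. 0) \<Longrightarrow> polyop Y p f = (\<lambda>_. 0) \<Longrightarrow>
      \<exists>w a. E w \<and> w \<noteq> (\<lambda>_. 0) \<and> Y w = (\<lambda>x. a * w x)"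
  proof -
    fix p f
    show "p \<noteq> 0 \<Longrightarrow> E f \<Longrightarrow> f \<noteq> (\<lambda>_. 0) \<Longrightarrow> polyop Y p f = (\<lambda>_. 0) \<Longrightarrow>
      \<exists>w a. E w \<and> w \<noteq> (\<lambda>_. 0) \<and> Y w = (\<lambda>x. a * w x)"
    proof (induction "degree p" arbitrary: p rule: less_induct)
      case less
      show ?case
      proof (cases "degree p = 0")
        case True
        then obtain c where c: "p = [:c:]" by (metis degree_eq_zeroE)
        with less.prems have "c \<noteq> 0" by simp
        have "polyop Y p f = (\<lambda>x. c * f x)" unfolding polyop_def using c True by simp
        then have "f = (\<lambda>_. 0)" using less.prems(4) \<open>c \<noteq> 0\<close> by (simp add: fun_eq_iff)
        then show ?thesis using less.prems by simp
      next
        case False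
        obtain z where z: "poly p z = 0"
        proof -
          have "\<not> constant (poly p)" using False constant_degree[of p] by simp
          then show ?thesis using fundamental_theorem_of_algebra[of p] that by blast
        qed
        then have "[:-z, 1:] dvd p" using dvd_iff_poly_eq_0[of "-z" p] by simp
        then obtain q where q: "p = [:-z, 1:] * q" by (elim dvdE)
        have "q \<noteq> 0" using less.prems(1) q by (metis mult_zero_right)
        have "[:-z, 1:] \<noteq> 0" by simp
        then have "degree p = degree [:-z, 1:] + degree q"
          using \<open>q \<noteq> 0\<close> q degree_mult_eq by metis
        then have dq: "degree q < degree p" by simp
        have pq: "polyop Y p f = (\<lambda>x. Y (polyop Y q f) x - z * polyop Y q f x)"
          unfolding q by (rule polyop_linfactor[OF lY])
        show ?thesis
        proof (cases "polyop Y q f = (\<lambda>_. 0)")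
          case True
          show ?thesis using less.hyps[OF dq \<open>q \<noteq> 0\<close> less.prems(2,3) True] .
        next
          case False
          have "Y (polyop Y q f) = (\<lambda>x. z * polyop Y q f x)"
          proof
            fix x
            have "polyop Y p f x = 0" using less.prems by simp
            then show "Y (polyop Y q f) x = z * polyop Y q f x" using pq by (simp add: fun_eq_iff)
          qed
          then show ?thesis using False Epoly[OF less.prems(2), of q] by auto
        qed
      qed
    qed
  qed
  define N where "N = card B"
  have fin: "finite {..N}" by simp
  have cd: "card B < card {..N}" unfolding N_def by simp
  have "E v" unfolding E_def using v by simp
  have sp: "\<forall>j\<in>{..N}. supp B ((Y ^^ j) v)"
  proof
    fix j
    show "supp B ((Y ^^ j) v)" using Epow[OF \<open>E v\<close>, of j] unfolding E_def by simp
  qed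
  obtain c where c: "\<exists>j\<in>{..N}. c j \<noteq> 0" "\<forall>x. (\<Sum>j\<in>{..N}. c j * (Y ^^ j) v x) = 0"
    using dependent_supp[OF B fin cd sp] by (elim exE conjE) 
  define p where "p = (\<Sum>j\<le>N. monom (c j) j)"
  have cp: "coeff p i = (if i \<le> N then c i else 0)" for i
    unfolding p_def coeff_sum by (simp add: coeff_monom)
  obtain j0 where "j0 \<le> N" "c j0 \<noteq> 0" using c(1) by auto
  then have "coeff p j0 \<noteq> 0" using cp by simp
  then have "p \<noteq> 0" by (metis coeff_0)
  have dp: "degree p \<le> N"
    using cp by (intro degree_le) auto
  have pv: "polyop Y p v = (\<lambda>_. 0)" using polyop_bound[OF dp, of Y v] c(2) cp by (simp add: fun_eq_iff)
  obtain w a where w: "E w" "w \<noteq> (\<lambda>_. 0)" "Y w = (\<lambda>x. a * w x)"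
    using chain[OF \<open>p \<noteq> 0\<close> \<open>E v\<close> v(2) pv] by (elim exE conjE)
  show ?thesis
    apply (rule exI[of _ w], rule exI[of _ a])
    using w unfolding E_def by simp
qed


definition ins :: "nat \<Rightarrow> 'a \<Rightarrow> 'a list \<Rightarrow> 'a list" where
  "ins k a w = take k w @ a # drop k w"

definition swp :: "nat \<Rightarrow> nat \<Rightarrow> 'a list \<Rightarrow> 'a list" where
  "swp i j x = x[i := x ! j, j := x ! i]"

definition tr :: "nat \<Rightarrow> nat \<Rightarrow> nat \<Rightarrow> nat" where
  "tr a b = (\<lambda>x. if x = a then b else if x = b then a else x)"

lemma length_del [simp]: "j < length w \<Longrightarrow> length (del_pos j w) = length w - 1"
  unfolding del_pos_def by simp

lemma length_ins [simp]: "k \<le> length w \<Longrightarrow> length (ins k a w) = Suc (length w)"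
  unfolding ins_def by simp

lemma set_ins [simp]: "set (ins k a w) = insert a (set w)"
  unfolding ins_def by (metis append_take_drop_id insert_def set_append set_simps(2) Un_insert_right
      Un_commute Un_insert_left)

lemma distinct_ins [simp]: "distinct (ins k a w) \<longleftrightarrow> a \<notin> set w \<and> distinct w"
proof -
  have "distinct (xs @ a # ys) \<longleftrightarrow> distinct (a # xs @ ys)" for xs ys :: "'a list"
    by auto
  then have "distinct (ins k a w) \<longleftrightarrow> distinct (a # take k w @ drop k w)"
    unfolding ins_def by blast
  then show ?thesis by simp
qed

lemma del_nth_split: "j < length w \<Longrightarrow> w = take j w @ w ! j # drop (Suc j) w"
  by (simp add: id_take_nth_drop)

lemma distinct_del: "distinct w \<Longrightarrow> distinct (del_pos j w)"
  unfolding del_pos_def using set_take_disj_set_drop_if_distinct[of w j "Suc j"]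
  by (simp add: distinct_append)

lemma set_del_distinct: "distinct w \<Longrightarrow> j < length w \<Longrightarrow> set (del_pos j w) = set w - {w ! j}"
proof -
  assume d: "distinct w" and j: "j < length w"
  have w: "w = take j w @ w ! j # drop (Suc j) w" using j by (rule del_nth_split)
  have "distinct (take j w @ w ! j # drop (Suc j) w)" using d w by simp
  then show ?thesis unfolding del_pos_def
    by (subst (2) w) auto
qed

lemma set_del_subset: "set (del_pos j w) \<subseteq> set w"
  unfolding del_pos_def by (auto dest: in_set_takeD in_set_dropD)

lemma nth_ins [simp]: "k \<le> length w \<Longrightarrow> ins k a w ! k = a"
  unfolding ins_def by (simp add: nth_append)

lemma del_ins_same [simp]: "k \<le> length x \<Longrightarrow> del_pos k (ins k a x) = x"
  unfolding del_pos_def ins_def by simp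

lemma ins_del_nth: "i < length x \<Longrightarrow> ins i (x ! i) (del_pos i x) = x"
  unfolding del_pos_def ins_def by (simp add: id_take_nth_drop[symmetric])

lemma ins_del: "i < length x \<Longrightarrow> ins i a (del_pos i x) = x[i := a]"
  unfolding del_pos_def ins_def by (simp add: upd_conv_take_nth_drop)

lemma del_ins_lt: "j \<le> i \<Longrightarrow> i < length x \<Longrightarrow> del_pos j (ins (Suc i) a x) = ins i a (del_pos j x)"
  unfolding del_pos_def ins_def
  by (simp add: drop_take)

lemma del_ins_gt: "j \<le> i \<Longrightarrow> i < length x \<Longrightarrow> del_pos (Suc i) (ins j a x) = ins j a (del_pos i x)"
  unfolding del_pos_def ins_def
  by (simp add: take_drop Suc_diff_le)

lemma move_eq: "move_letter u v w = ins v (w ! u) (del_pos u w)"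
  unfolding move_letter_def ins_def Let_def by simp

lemma set_del_ins: "u < length w \<Longrightarrow> insert (w ! u) (set (del_pos u w)) = set w"
  using ins_del_nth[of u w] set_ins[of u "w ! u" "del_pos u w"] by simp

lemma length_move [simp]: "u < length w \<Longrightarrow> v < length w \<Longrightarrow> length (move_letter u v w) = length w"
  unfolding move_eq by simp

lemma set_move [simp]: "u < length w \<Longrightarrow> set (move_letter u v w) = set w"
  unfolding move_eq using set_del_ins by simp

lemma distinct_move [simp]: "u < length w \<Longrightarrow> distinct (move_letter u v w) = distinct w"
proof -
  assume u: "u < length w"
  have "distinct w = distinct (ins u (w ! u) (del_pos u w))" using ins_del_nth[OF u] by simp
  then show ?thesis unfolding move_eq by simp
qed

lemma move_inv: "u < length w \<Longrightarrow> v < length w \<Longrightarrow> move_letter v u (move_letter u v w) = w"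
proof -
  assume u: "u < length w" and v: "v < length w"
  have l: "v \<le> length (del_pos u w)" using u v by simp
  have "move_letter u v w ! v = w ! u" unfolding move_eq using l by simp
  moreover have "del_pos v (move_letter u v w) = del_pos u w" unfolding move_eq using l by simp
  ultimately show ?thesis using ins_del_nth[OF u] unfolding move_eq[of v u] by simp
qed

lemma map_del: "map f (del_pos j x) = del_pos j (map f x)"
  unfolding del_pos_def by (simp add: take_map drop_map)

lemma map_ins: "map f (ins k a x) = ins k (f a) (map f x)"
  unfolding ins_def by (simp add: take_map drop_map)

lemma map_move: "u < length x \<Longrightarrow> map f (move_letter u v x) = move_letter u v (map f x)"
  unfolding move_eq by (simp add: map_ins map_del)

lemma map_swp: "i < length x \<Longrightarrow> j < length x \<Longrightarrow> map f (swp i j x) = swp i j (map f x)"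
  unfolding swp_def by (simp add: map_update)

lemma length_swp [simp]: "length (swp i j x) = length x"
  unfolding swp_def by simp

lemma tr_tr [simp]: "tr a b (tr a b y) = y"
  unfolding tr_def by auto

lemma map_tr_tr [simp]: "map (tr a b) (map (tr a b) x) = x"
  by (induction x) auto

lemma tr_sym: "tr a b = tr b a"
  unfolding tr_def by auto

lemma inj_tr: "inj (tr a b)"
  by (metis injI tr_tr)

lemma tr_in: "a \<in> A \<Longrightarrow> b \<in> A \<Longrightarrow> y \<in> A \<Longrightarrow> tr a b y \<in> A"
  unfolding tr_def by auto

lemma swp_tr: "distinct x \<Longrightarrow> i < length x \<Longrightarrow> j < length x \<Longrightarrow> map (tr (x ! i) (x ! j)) x = swp i j x"
  by (rule nth_equalityI) (auto simp: swp_def tr_def nth_list_update nth_eq_iff_index_eq)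

lemma repl_tr: "distinct x \<Longrightarrow> j < length x \<Longrightarrow> b \<notin> set x \<Longrightarrow> map (tr (x ! j) b) x = x[j := b]"
  by (rule nth_equalityI) (auto simp: tr_def nth_list_update nth_eq_iff_index_eq)

lemma tr_notin: "a \<notin> set x \<Longrightarrow> b \<notin> set x \<Longrightarrow> map (tr a b) x = x"
  by (induction x) (auto simp: tr_def)

lemma tr_same [simp]: "tr a a = id"
  unfolding tr_def by auto

fun sgnw :: "nat list \<Rightarrow> complex" where
  "sgnw [] = 1"
| "sgnw (a # w) = (-1) ^ length (filter (\<lambda>b. b < a) w) * sgnw w"

lemma sgnw_nonzero: "sgnw w \<noteq> 0"
  by (induction w) auto

lemma filter_ins: "length (filter P (ins k a w)) = length (filter P w) + (if P a then 1 else 0)"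
proof -
  have "length (filter P w) = length (filter P (take k w)) + length (filter P (drop k w))"
    by (metis append_take_drop_id filter_append length_append)
  then show ?thesis unfolding ins_def by simp
qed

lemma sgnw_ins: "a \<notin> set w \<Longrightarrow> k \<le> length w \<Longrightarrow>
    sgnw (ins k a w) = (-1) ^ (k + length (filter (\<lambda>b. b < a) w)) * sgnw w"
proof (induction w arbitrary: k)
  case Nil
  then show ?case by (simp add: ins_def)
next
  case (Cons b w)
  show ?case
  proof (cases k)
    case 0
    then show ?thesis by (simp add: ins_def)
  next
    case (Suc k')
    have e: "ins k a (b # w) = b # ins k' a w" unfolding Suc ins_def by simp
    have ih: "sgnw (ins k' a w) = (-1) ^ (k' + length (filter (\<lambda>b. b < a) w)) * sgnw w"
      using Cons Suc by simp
    have ab: "a \<noteq> b" using Cons by simp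
    show ?thesis unfolding e using ih ab filter_ins[of "\<lambda>c. c < b" k' a w]
      by (cases "a < b") (auto simp: Suc power_add)
  qed
qed

lemma sgnw_move: "distinct w \<Longrightarrow> u < length w \<Longrightarrow> v < length w \<Longrightarrow>
    sgnw (move_letter u v w) = (-1) ^ (u + v) * sgnw w"
proof -
  assume d: "distinct w" and u: "u < length w" and v: "v < length w"
  define c where "c = w ! u"
  define e where "e = del_pos u w"
  define K where "K = length (filter (\<lambda>b. b < c) e)"
  have ce: "c \<notin> set e" unfolding c_def e_def using set_del_distinct[OF d u] by simp
  have w: "w = ins u c e" unfolding c_def e_def using ins_del_nth[OF u] by simp
  have ue: "u \<le> length e" unfolding e_def using u by simp
  have s1: "sgnw w = (-1) ^ (u + K) * sgnw e"
    unfolding K_def using sgnw_ins[OF ce ue] w by simp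
  have s2: "sgnw (move_letter u v w) = (-1) ^ (v + K) * sgnw e"
    unfolding K_def move_eq c_def[symmetric] e_def[symmetric]
    by (rule sgnw_ins[OF ce]) (use u v length_del[OF u] in \<open>unfold e_def, linarith\<close>)
  have "(-1::complex) ^ (u + v) * (-1) ^ (u + K) = (-1) ^ (v + K) * ((-1) ^ (u + u))"
    by (simp add: power_add)
  also have "(-1::complex) ^ (u + u) = 1" by (simp flip: mult_2)
  finally show ?thesis using s1 s2 by simp
qed


definition wop :: "'b set \<Rightarrow> 'i set \<Rightarrow> ('i \<Rightarrow> complex) \<Rightarrow> ('i \<Rightarrow> 'b \<Rightarrow> 'b) \<Rightarrow> ('b \<Rightarrow> complex) \<Rightarrow> 'b \<Rightarrow> complex" where
  "wop W I c h f = (\<lambda>x. if x \<in> W then (\<Sum>i\<in>I. c i * f (h i x)) else 0)"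

lemma lin_wop: "lin (wop W I c h)"
  unfolding lin_def wop_def by (auto simp: fun_eq_iff sum.distrib sum_distrib_left algebra_simps)

lemma supp_wop: "supp W (wop W I c h f)"
  unfolding supp_def wop_def by simp

lemma wop_comm:
  assumes "\<And>i x. i \<in> I \<Longrightarrow> x \<in> W \<Longrightarrow> h i x \<in> W"
    and "\<And>j x. j \<in> J \<Longrightarrow> x \<in> W \<Longrightarrow> g j x \<in> W"
    and "\<And>i j x. i \<in> I \<Longrightarrow> j \<in> J \<Longrightarrow> x \<in> W \<Longrightarrow> h i (g j x) = g j (h i x)"
  shows "wop W I c h (wop W J d g f) = wop W J d g (wop W I c h f)"
proof
  fix x
  show "wop W I c h (wop W J d g f) x = wop W J d g (wop W I c h f) x"
  proof (cases "x \<in> W")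
    case True
    have "wop W I c h (wop W J d g f) x = (\<Sum>i\<in>I. \<Sum>j\<in>J. c i * d j * f (g j (h i x)))"
      using True assms(1) unfolding wop_def by (simp add: sum_distrib_left mult.assoc)
    also have "\<dots> = (\<Sum>j\<in>J. \<Sum>i\<in>I. d j * c i * f (h i (g j x)))"
      by (subst sum.swap) (intro sum.cong refl, simp add: assms(3) True mult.commute)
    also have "\<dots> = wop W J d g (wop W I c h f) x"
      using True assms(2) unfolding wop_def by (simp add: sum_distrib_left mult.assoc)
    finally show ?thesis .
  qed (simp add: wop_def)
qed

lemma wop_transport:
  assumes "p \<in> W'" "\<phi> p \<in> W"
    and "\<And>i. i \<in> I \<Longrightarrow> h i p \<in> W'"
    and "\<And>i. i \<in> I \<Longrightarrow> \<phi> (h i p) = h i (\<phi> p)"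
  shows "wop W' I c h (\<lambda>q. if q \<in> W' then w (\<phi> q) else 0) p = wop W I c h w (\<phi> p)"
  using assms unfolding wop_def by (auto intro!: sum.cong)


definition Uop :: "nat \<Rightarrow> nat \<Rightarrow> (nat list \<Rightarrow> complex) \<Rightarrow> nat list \<Rightarrow> complex" where
  "Uop n r = wop (inj_words n r) ({..<r} \<times> {..<r}) (\<lambda>(u,v). (-1) ^ (u + v)) (\<lambda>(u,v). move_letter u v)"

definition Top :: "nat \<Rightarrow> nat \<Rightarrow> (nat list \<Rightarrow> complex) \<Rightarrow> nat list \<Rightarrow> complex" where
  "Top n r = wop (inj_words n r) ({..<r} \<times> {..<r}) (\<lambda>_. 1) (\<lambda>(i,j). swp i j)"

definition Xop :: "nat \<Rightarrow> nat \<Rightarrow> nat \<Rightarrow> (nat list \<Rightarrow> complex) \<Rightarrow> nat list \<Rightarrow> complex" where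
  "Xop n r k = wop (inj_words n r) {1..<k} (\<lambda>_. 1) (\<lambda>i. map (tr i k))"

definition Sop :: "nat \<Rightarrow> nat \<Rightarrow> nat \<Rightarrow> (nat list \<Rightarrow> complex) \<Rightarrow> nat list \<Rightarrow> complex" where
  "Sop n r i = wop (inj_words n r) {()} (\<lambda>_. 1) (\<lambda>_. map (tr i (Suc i)))"

definition Lop :: "nat \<Rightarrow> nat \<Rightarrow> nat \<Rightarrow> (nat list \<Rightarrow> complex) \<Rightarrow> nat list \<Rightarrow> complex" where
  "Lop n r m = wop (inj_words n r) (Sigma {1..m} (\<lambda>k. {1..<k})) (\<lambda>_. 1) (\<lambda>(k,i). map (tr i k))"

lemma inj_words_finite: "finite (inj_words n r)"
proof -
  have "inj_words n r \<subseteq> {w. set w \<subseteq> {1..n} \<and> length w = r}" unfolding inj_words_def by auto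
  moreover have "finite {w. set w \<subseteq> {1..n} \<and> length w = r}"
    by (rule finite_lists_length_eq) simp
  ultimately show ?thesis by (rule finite_subset)
qed

lemma map_tr_W: "a \<in> {1..n} \<Longrightarrow> b \<in> {1..n} \<Longrightarrow> x \<in> inj_words n r \<Longrightarrow> map (tr a b) x \<in> inj_words n r"
  unfolding inj_words_def using inj_tr[of a b] tr_in[of a "{1..n}" b]
  by (auto simp: distinct_map inj_on_def)

lemma move_W: "u < r \<Longrightarrow> x \<in> inj_words n r \<Longrightarrow> v < r \<Longrightarrow> move_letter u v x \<in> inj_words n r"
  unfolding inj_words_def by auto

lemma swp_W: "i < r \<Longrightarrow> j < r \<Longrightarrow> x \<in> inj_words n r \<Longrightarrow> swp i j x \<in> inj_words n r"
proof -
  assume i: "i < r" and j: "j < r" and x: "x \<in> inj_words n r"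
  then have "x ! i \<in> set x" "x ! j \<in> set x" unfolding inj_words_def by auto
  then have "x ! i \<in> {1..n}" "x ! j \<in> {1..n}" using x unfolding inj_words_def by auto
  then have "map (tr (x ! i) (x ! j)) x \<in> inj_words n r" using map_tr_W x by blast
  moreover have "map (tr (x ! i) (x ! j)) x = swp i j x"
    using swp_tr[of x i j] x i j unfolding inj_words_def by auto
  ultimately show ?thesis by simp
qed

lemma Xop_eq: "Xop n r k f x = (if x \<in> inj_words n r then (\<Sum>i\<in>{1..<k}. f (map (tr i k) x)) else 0)"
  unfolding Xop_def wop_def by simp

lemma Sop_eq: "Sop n r i f x = (if x \<in> inj_words n r then f (map (tr i (Suc i)) x) else 0)"
  unfolding Sop_def wop_def by simp

lemma Lop_eq: "Lop n r m f x = (\<Sum>k\<in>{1..m}. Xop n r k f x)"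
proof -
  have "(\<Sum>k\<in>{1..m}. \<Sum>i\<in>{1..<k}. f (map (tr i k) x)) =
        (\<Sum>(k,i)\<in>Sigma {1..m} (\<lambda>k. {1..<k}). f (map (tr i k) x))"
    by (rule sum.Sigma) auto
  then show ?thesis unfolding Lop_def Xop_def wop_def
    by (simp add: split_beta)
qed


lemma tr_tr_comp [simp]: "tr a b \<circ> tr a b = id"
  by (auto simp: fun_eq_iff)

lemma Sop_Sop:
  assumes "supp (inj_words n r) f" "1 \<le> i" "Suc i \<le> n"
  shows "Sop n r i (Sop n r i f) = f"
proof
  fix x
  show "Sop n r i (Sop n r i f) x = f x"
  proof (cases "x \<in> inj_words n r")
    case True
    have "map (tr i (Suc i)) x \<in> inj_words n r" using map_tr_W True assms by auto
    then show ?thesis using True by (simp add: Sop_eq)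
  next
    case False
    then show ?thesis using assms(1) by (simp add: Sop_eq supp_def)
  qed
qed

lemma tr_conj1: "j < i \<Longrightarrow> tr i (Suc i) \<circ> tr j (Suc i) = tr j i \<circ> tr i (Suc i)"
  unfolding tr_def by (auto simp: fun_eq_iff)



lemma Xop_Sop:
  assumes "supp (inj_words n r) f" "1 \<le> i" "Suc i \<le> n"
  shows "Xop n r (Suc i) (Sop n r i f) = (\<lambda>x. Sop n r i (Xop n r i f) x + f x)"
proof
  fix x
  show "Xop n r (Suc i) (Sop n r i f) x = Sop n r i (Xop n r i f) x + f x"
  proof (cases "x \<in> inj_words n r")
    case True
    let ?s = "tr i (Suc i)"
    have W1: "map (tr j (Suc i)) x \<in> inj_words n r" if "j \<in> {1..<Suc i}" for j
      using map_tr_W True assms that by auto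
    have W2: "map ?s x \<in> inj_words n r" using map_tr_W True assms by auto
    have "Xop n r (Suc i) (Sop n r i f) x = (\<Sum>j\<in>{1..<Suc i}. f (map ?s (map (tr j (Suc i)) x)))"
      using True W1 by (simp add: Xop_eq Sop_eq)
    also have "{1..<Suc i} = insert i {1..<i}" using assms by auto
    also have "(\<Sum>j\<in>insert i {1..<i}. f (map ?s (map (tr j (Suc i)) x)))
        = f x + (\<Sum>j\<in>{1..<i}. f (map (tr j i) (map ?s x)))"
    proof -
      have "(\<Sum>j\<in>{1..<i}. f (map ?s (map (tr j (Suc i)) x))) = (\<Sum>j\<in>{1..<i}. f (map (tr j i) (map ?s x)))"
      proof (rule sum.cong[OF refl])
        fix j assume "j \<in> {1..<i}"
        then have "?s \<circ> tr j (Suc i) = tr j i \<circ> ?s" by (intro tr_conj1) auto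
        then show "f (map ?s (map (tr j (Suc i)) x)) = f (map (tr j i) (map ?s x))" by simp
      qed
      then show ?thesis by simp
    qed
    also have "(\<Sum>j\<in>{1..<i}. f (map (tr j i) (map ?s x))) = Sop n r i (Xop n r i f) x"
      using True W2 by (simp add: Xop_eq Sop_eq)
    finally show ?thesis by simp
  next
    case False
    then show ?thesis using assms(1) by (simp add: Sop_eq Xop_eq supp_def)
  qed
qed

lemma Xop_Sop2:
  assumes "supp (inj_words n r) f" "1 \<le> i" "Suc i \<le> n"
  shows "Xop n r i (Sop n r i f) = (\<lambda>x. Sop n r i (Xop n r (Suc i) f) x - f x)"
proof -
  let ?S = "Sop n r i" and ?Y = "Xop n r i" and ?Z = "Xop n r (Suc i)"
  have sS: "supp (inj_words n r) (?S f)" unfolding Sop_def by (rule supp_wop)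
  have "?Z (?S (?S f)) = (\<lambda>x. ?S (?Y (?S f)) x + ?S f x)" by (rule Xop_Sop[OF sS assms(2,3)])
  then have "?Z f = (\<lambda>x. ?S (?Y (?S f)) x + ?S f x)" using Sop_Sop[OF assms] by simp
  then have "?S (?Z f) = (\<lambda>x. ?S (?S (?Y (?S f))) x + ?S (?S f) x)"
    using lin_add[OF lin_wop] unfolding Sop_def by metis
  also have "?S (?S (?Y (?S f))) = ?Y (?S f)"
    by (rule Sop_Sop[OF _ assms(2,3)]) (unfold Xop_def, rule supp_wop)
  finally show ?thesis using Sop_Sop[OF assms] by (simp add: fun_eq_iff)
qed

lemma tr_conj2: "a \<noteq> k \<Longrightarrow> j \<noteq> k \<Longrightarrow> tr (tr a j b) k \<circ> tr a j = tr a j \<circ> tr b k"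
  unfolding tr_def by (auto simp: fun_eq_iff)

lemma Xop_comm_lt:
  assumes "j < k" "k \<le> n"
  shows "Xop n r j (Xop n r k f) = Xop n r k (Xop n r j f)"
proof
  fix x
  show "Xop n r j (Xop n r k f) x = Xop n r k (Xop n r j f) x"
  proof (cases "x \<in> inj_words n r")
    case True
    have Wj: "map (tr a j) x \<in> inj_words n r" if "a \<in> {1..<j}" for a
      using map_tr_W True assms that by auto
    have Wk: "map (tr b k) x \<in> inj_words n r" if "b \<in> {1..<k}" for b
      using map_tr_W True assms that by auto
    have "Xop n r j (Xop n r k f) x = (\<Sum>a\<in>{1..<j}. \<Sum>b\<in>{1..<k}. f (map (tr b k) (map (tr a j) x)))"
      using True Wj by (simp add: Xop_eq)
    also have "\<dots> = (\<Sum>a\<in>{1..<j}. \<Sum>b\<in>{1..<k}. f (map (tr a j) (map (tr b k) x)))"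
    proof (rule sum.cong[OF refl])
      fix a assume a: "a \<in> {1..<j}"
      show "(\<Sum>b\<in>{1..<k}. f (map (tr b k) (map (tr a j) x))) = (\<Sum>b\<in>{1..<k}. f (map (tr a j) (map (tr b k) x)))"
      proof (rule sum.reindex_bij_witness[of _ "tr a j" "tr a j"])
        fix b assume "b \<in> {1..<k}"
        then show "tr a j (tr a j b) = b" "tr a j b \<in> {1..<k}"
          using a assms tr_in[of a "{1..<k}" j b] by auto
      next
        fix b assume "b \<in> {1..<k}"
        then show "tr a j (tr a j b) = b" "tr a j b \<in> {1..<k}"
          using a assms tr_in[of a "{1..<k}" j b] by auto
      next
        fix b assume "b \<in> {1..<k}"
        have "tr (tr a j (tr a j b)) k \<circ> tr a j = tr a j \<circ> tr (tr a j b) k"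
          using a assms by (intro tr_conj2) auto
        then have "map (tr a j) (map (tr (tr a j b) k) x) = map (tr b k) (map (tr a j) x)"
          by (metis map_map tr_tr)
        then show "f (map (tr a j) (map (tr (tr a j b) k) x)) = f (map (tr b k) (map (tr a j) x))"
          by (rule arg_cong)
      qed
    qed
    also have "\<dots> = (\<Sum>b\<in>{1..<k}. \<Sum>a\<in>{1..<j}. f (map (tr a j) (map (tr b k) x)))"
      by (rule sum.swap)
    also have "\<dots> = Xop n r k (Xop n r j f) x"
      using True Wk by (simp add: Xop_eq)
    finally show ?thesis .
  qed (simp add: Xop_eq)
qed

lemma Xop_comm:
  assumes "j \<le> n" "k \<le> n"
  shows "Xop n r j (Xop n r k f) = Xop n r k (Xop n r j f)"
  using Xop_comm_lt[of j k n r f] Xop_comm_lt[of k j n r f] assms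
  by (cases j k rule: linorder_cases) auto

lemma lin_Xop: "lin (Xop n r k)" unfolding Xop_def by (rule lin_wop)
lemma lin_Sop: "lin (Sop n r k)" unfolding Sop_def by (rule lin_wop)
lemma lin_Lop: "lin (Lop n r k)" unfolding Lop_def by (rule lin_wop)
lemma supp_Xop: "supp (inj_words n r) (Xop n r k f)" unfolding Xop_def by (rule supp_wop)
lemma supp_Sop: "supp (inj_words n r) (Sop n r k f)" unfolding Sop_def by (rule supp_wop)
lemma supp_Lop: "supp (inj_words n r) (Lop n r k f)" unfolding Lop_def by (rule supp_wop)

definition eig :: "'a set \<Rightarrow> (('a \<Rightarrow> complex) \<Rightarrow> ('a \<Rightarrow> complex)) \<Rightarrow> complex \<Rightarrow> bool" where
  "eig B T c \<longleftrightarrow> (\<exists>f. supp B f \<and> f \<noteq> (\<lambda>_. 0) \<and> T f = (\<lambda>x. c * f x))"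

lemma fun_nonzero: "f \<noteq> (\<lambda>_. 0) \<Longrightarrow> \<exists>x. f x \<noteq> 0"
  by auto

lemma JM_int:
  assumes "1 \<le> k" "k \<le> n"
  shows "eig (inj_words n r) (Xop n r k) b \<Longrightarrow> b \<in> \<int>"
  using assms
proof (induction k arbitrary: b rule: nat_induct_at_least)
  case base
  then obtain v where v: "supp (inj_words n r) v" "v \<noteq> (\<lambda>_. 0)" "Xop n r 1 v = (\<lambda>x. b * v x)"
    unfolding eig_def by blast
  obtain x where x: "v x \<noteq> 0" using v(2) by auto
  have "Xop n r 1 v x = 0" by (simp add: Xop_eq)
  then have "b = 0" using v(3) x by (metis mult_eq_0_iff)
  then show ?case by simp
next
  case (Suc i)
  let ?W = "inj_words n r"
  let ?S = "Sop n r i" and ?Y = "Xop n r i" and ?Z = "Xop n r (Suc i)"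
  obtain v0 where v0: "supp ?W v0" "v0 \<noteq> (\<lambda>_. 0)" "?Z v0 = (\<lambda>x. b * v0 x)"
    using Suc.prems unfolding eig_def by blast
  have YZ: "?Y (?Z f) = ?Z (?Y f)" for f
    using Xop_comm Suc.prems by (metis Suc_leD)
  obtain v a where v: "supp ?W v" "v \<noteq> (\<lambda>_. 0)" "?Z v = (\<lambda>x. b * v x)" "?Y v = (\<lambda>x. a * v x)"
    using common_eig[where Y = ?Y and Z = ?Z, OF inj_words_finite lin_Xop lin_Xop supp_Xop YZ v0]
    by blast
  have ai: "a \<in> \<int>" using Suc.IH[of a] Suc.prems v unfolding eig_def by auto
  define w where "w = ?S v"
  have Yw: "?Y w = (\<lambda>x. b * w x - v x)"
  proof -
    have "?Y w = (\<lambda>x. ?S (?Z v) x - v x)" unfolding w_def by (rule Xop_Sop2[OF v(1) Suc.hyps Suc.prems(2)])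
    also have "?S (?Z v) = (\<lambda>x. b * w x)" unfolding w_def v(3) by (rule lin_smult[OF lin_Sop])
    finally show ?thesis .
  qed
  have Sw: "?S w = v" unfolding w_def by (rule Sop_Sop[OF v(1) Suc.hyps Suc.prems(2)])
  show ?case
  proof (cases "a = b")
    case True then show ?thesis using ai by simp
  next
    case False
    define u where "u = (\<lambda>x. w x + v x / (a - b))"
    have Yu: "?Y u = (\<lambda>x. b * u x)"
    proof -
      have "?Y u = (\<lambda>x. ?Y w x + ?Y (\<lambda>x. (1 / (a - b)) * v x) x)"
        unfolding u_def using lin_add[OF lin_Xop, of n r i w "\<lambda>x. (1 / (a - b)) * v x"] by simp
      also have "?Y (\<lambda>x. (1 / (a - b)) * v x) = (\<lambda>x. (1 / (a - b)) * (a * v x))"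
        using lin_smult[OF lin_Xop, of n r i "1 / (a - b)" v] v(4) by simp
      finally show ?thesis unfolding Yw u_def using False
        by (simp add: fun_eq_iff field_simps)
    qed
    show ?thesis
    proof (cases "u = (\<lambda>_. 0)")
      case False
      have "supp ?W u" using v(1) supp_Sop unfolding u_def w_def supp_def by simp
      then have "eig ?W ?Y b" unfolding eig_def using False Yu by blast
      then show ?thesis using Suc.IH Suc.prems(2) by simp
    next
      case True
      define l where "l = 1 / (b - a)"
      have wl: "w = (\<lambda>x. l * v x)"
        using True \<open>a \<noteq> b\<close> unfolding u_def l_def by (auto simp: fun_eq_iff field_simps)
      have "v = ?S w" using Sw by simp
      also have "\<dots> = ?S (\<lambda>x. l * v x)" using wl by simp
      also have "\<dots> = (\<lambda>x. l * ?S v x)" by (rule lin_smult[OF lin_Sop])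
      also have "?S v = w" by (simp add: w_def)
      also have "(\<lambda>x. l * w x) = (\<lambda>x. l * l * v x)" using wl by (simp add: mult.assoc)
      finally have vv: "v = (\<lambda>x. l * l * v x)" .
      obtain x where x: "v x \<noteq> 0" using v(2) by auto
      have "v x = l * l * v x" using vv by (metis)
      then have "l * l = 1" using x by simp
      then have "(b - a) * (b - a) = 1" unfolding l_def using \<open>a \<noteq> b\<close> by (simp add: field_simps)
      then have "(b - a - 1) * (b - a + 1) = 0" by (simp add: algebra_simps)
      then have "b - a - 1 = 0 \<or> b - a + 1 = 0" by simp
      then have "b = a + 1 \<or> b = a - 1" by (elim disjE) (simp_all add: algebra_simps)
      then show ?thesis using ai by auto
    qed
  qed
qed

lemma Lop_fun: "Lop n r m f = (\<lambda>x. \<Sum>k\<in>{1..m}. 1 * Xop n r k f x)"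
  using Lop_eq by (simp add: fun_eq_iff)

lemma Lop_Suc: "Lop n r (Suc m) f x = Lop n r m f x + Xop n r (Suc m) f x"
  unfolding Lop_eq by (simp add: add.commute)

lemma L_int:
  assumes "m \<le> n"
  shows "eig (inj_words n r) (Lop n r m) t \<Longrightarrow> t \<in> \<int>"
  using assms
proof (induction m arbitrary: t)
  case 0
  then obtain v where v: "supp (inj_words n r) v" "v \<noteq> (\<lambda>_. 0)" "Lop n r 0 v = (\<lambda>x. t * v x)"
    unfolding eig_def by blast
  obtain x where x: "v x \<noteq> 0" using v(2) by auto
  have "Lop n r 0 v x = 0" by (simp add: Lop_eq)
  then have "t = 0" using v(3) x by (metis mult_eq_0_iff)
  then show ?case by simp
next
  case (Suc m)
  let ?W = "inj_words n r"
  let ?Y = "Xop n r (Suc m)" and ?Z = "Lop n r (Suc m)"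
  obtain v0 where v0: "supp ?W v0" "v0 \<noteq> (\<lambda>_. 0)" "?Z v0 = (\<lambda>x. t * v0 x)"
    using Suc.prems unfolding eig_def by blast
  have YZ: "?Y (?Z f) = ?Z (?Y f)" for f
  proof -
    have "?Y (?Z f) = (\<lambda>x. \<Sum>k\<in>{1..Suc m}. 1 * ?Y (Xop n r k f) x)"
      unfolding Lop_fun by (rule lin_sum[OF lin_Xop]) simp
    also have "\<dots> = (\<lambda>x. \<Sum>k\<in>{1..Suc m}. 1 * Xop n r k (?Y f) x)"
      using Xop_comm Suc.prems(2) by (intro ext sum.cong refl) (metis atLeastAtMost_iff le_trans)
    also have "\<dots> = ?Z (?Y f)" unfolding Lop_fun ..
    finally show ?thesis .
  qed
  obtain w b where w: "supp ?W w" "w \<noteq> (\<lambda>_. 0)" "?Z w = (\<lambda>x. t * w x)" "?Y w = (\<lambda>x. b * w x)"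
    using common_eig[where Y = ?Y and Z = ?Z, OF inj_words_finite lin_Xop lin_Lop supp_Xop YZ v0]
    by blast
  have bi: "b \<in> \<int>" using JM_int[of "Suc m" n r b] Suc.prems w unfolding eig_def by auto
  have "Lop n r m w = (\<lambda>x. (t - b) * w x)"
  proof
    fix x
    have "Lop n r m w x = ?Z w x - ?Y w x" using Lop_Suc[of n r m w x] by simp
    then show "Lop n r m w x = (t - b) * w x" using w(3,4) by (simp add: algebra_simps)
  qed
  then have "t - b \<in> \<int>" using Suc.IH[of "t - b"] Suc.prems(2) w(1,2) unfolding eig_def by auto
  then have "(t - b) + b \<in> \<int>" using bi by (rule Ints_add)
  then show ?case by simp
qed


lemma del_W: "y \<in> inj_words n (Suc r) \<Longrightarrow> l < Suc r \<Longrightarrow> del_pos l y \<in> inj_words n r"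
proof -
  assume y: "y \<in> inj_words n (Suc r)" and l: "l < Suc r"
  have "length (del_pos l y) = r" using y l unfolding inj_words_def by simp
  moreover have "distinct (del_pos l y)" using y distinct_del unfolding inj_words_def by blast
  moreover have "set (del_pos l y) \<subseteq> {1..n}" using y set_del_subset[of l y] unfolding inj_words_def by blast
  ultimately show ?thesis unfolding inj_words_def by blast
qed

lemma ins_W: "u \<in> inj_words n m \<Longrightarrow> a \<in> {1..n} - set u \<Longrightarrow> i \<le> m \<Longrightarrow> ins i a u \<in> inj_words n (Suc m)"
  unfolding inj_words_def by auto

lemma if_mult: "(if P then a else 0) * b = (if P then a * b else (0::complex))"
  by simp

lemma collapse:
  fixes e :: "nat \<Rightarrow> complex" and g :: "'u \<Rightarrow> complex"
  assumes "finite U" "\<And>l. l < m \<Longrightarrow> d l \<in> U"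
  shows "(\<Sum>u\<in>U. (\<Sum>l<m. if d l = u then e l else 0) * g u) = (\<Sum>l<m. e l * g (d l))"
proof -
  have "(\<Sum>u\<in>U. (\<Sum>l<m. if d l = u then e l else 0) * g u) = (\<Sum>u\<in>U. \<Sum>l<m. if d l = u then e l * g u else 0)"
    by (simp only: sum_distrib_right if_mult)
  also have "\<dots> = (\<Sum>l<m. \<Sum>u\<in>U. if d l = u then e l * g u else 0)" by (rule sum.swap)
  also have "\<dots> = (\<Sum>l<m. e l * g (d l))"
    using assms by (intro sum.cong refl) simp
  finally show ?thesis .
qed

lemma cnj_bd_coeff: "cnj (bd_coeff w u) = bd_coeff w u"
  unfolding bd_coeff_def by (simp add: if_distrib cong: if_cong)

lemma cobd_eq:
  assumes "y \<in> inj_words n (Suc r)"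
  shows "cobd n r g y = (\<Sum>l<Suc r. (-1) ^ l * g (del_pos l y))"
proof -
  have ly: "length y = Suc r" using assms unfolding inj_words_def by simp
  have "cobd n r g y = (\<Sum>u\<in>inj_words n r. bd_coeff y u * g u)"
    using assms unfolding cobd_def by (simp add: cnj_bd_coeff)
  also have "\<dots> = (\<Sum>u\<in>inj_words n r. (\<Sum>l<Suc r. if del_pos l y = u then (-1) ^ l else 0) * g u)"
    unfolding bd_coeff_def ly ..
  also have "\<dots> = (\<Sum>l<Suc r. (-1) ^ l * g (del_pos l y))"
    by (rule collapse[OF inj_words_finite]) (rule del_W[OF assms])
  finally show ?thesis .
qed

lemma bd_inner:
  assumes u: "u \<in> inj_words n m" and i: "i \<le> m"
  shows "(\<Sum>w\<in>inj_words n (Suc m). if del_pos i w = u then h w else 0) = (\<Sum>a\<in>{1..n} - set u. h (ins i a u))"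
proof -
  have lu: "length u = m" using u unfolding inj_words_def by simp
  have "(\<Sum>w\<in>inj_words n (Suc m). if del_pos i w = u then h w else 0) = (\<Sum>w\<in>{w\<in>inj_words n (Suc m). del_pos i w = u}. h w)"
    by (rule sum.inter_filter[symmetric]) (rule inj_words_finite)
  also have "\<dots> = (\<Sum>a\<in>{1..n} - set u. h (ins i a u))"
  proof (rule sum.reindex_bij_betw[symmetric], rule bij_betw_byWitness[where f' = "\<lambda>w. w ! i"])
    show "\<forall>a\<in>{1..n} - set u. ins i a u ! i = a" using lu i by simp
    show "\<forall>w\<in>{w \<in> inj_words n (Suc m). del_pos i w = u}. ins i (w ! i) u = w"
    proof
      fix w assume w: "w \<in> {w \<in> inj_words n (Suc m). del_pos i w = u}"
      then have "i < length w" using i unfolding inj_words_def by simp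
      then show "ins i (w ! i) u = w" using ins_del_nth[of i w] w by simp
    qed
    show "(\<lambda>a. ins i a u) ` ({1..n} - set u) \<subseteq> {w \<in> inj_words n (Suc m). del_pos i w = u}"
      using ins_W[OF u _ i] lu i by auto
    show "(\<lambda>w. w ! i) ` {w \<in> inj_words n (Suc m). del_pos i w = u} \<subseteq> {1..n} - set u"
    proof
      fix a assume "a \<in> (\<lambda>w. w ! i) ` {w \<in> inj_words n (Suc m). del_pos i w = u}"
      then obtain w where w: "w \<in> inj_words n (Suc m)" "del_pos i w = u" "a = w ! i" by auto
      have il: "i < length w" using w(1) i unfolding inj_words_def by simp
      have "a \<in> set w" using w(3) il by simp
      moreover have "a \<notin> set u" using w set_del_distinct[of w i] il unfolding inj_words_def by auto
      ultimately show "a \<in> {1..n} - set u" using w(1) unfolding inj_words_def by auto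
    qed
  qed
  finally show ?thesis .
qed

lemma bd_eq:
  assumes u: "u \<in> inj_words n m"
  shows "bd n (Suc m) h u = (\<Sum>i<Suc m. (-1) ^ i * (\<Sum>a\<in>{1..n} - set u. h (ins i a u)))"
proof -
  have "bd n (Suc m) h u = (\<Sum>w\<in>inj_words n (Suc m). bd_coeff w u * h w)"
    using u unfolding bd_def by simp
  also have "\<dots> = (\<Sum>w\<in>inj_words n (Suc m). \<Sum>i<Suc m. if del_pos i w = u then (-1) ^ i * h w else 0)"
  proof (rule sum.cong[OF refl])
    fix w assume "w \<in> inj_words n (Suc m)"
    then have "length w = Suc m" unfolding inj_words_def by simp
    then show "bd_coeff w u * h w = (\<Sum>i<Suc m. if del_pos i w = u then (-1) ^ i * h w else 0)"
      unfolding bd_coeff_def by (simp only: sum_distrib_right if_mult mult.assoc)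
  qed
  also have "\<dots> = (\<Sum>i<Suc m. \<Sum>w\<in>inj_words n (Suc m). if del_pos i w = u then (-1) ^ i * h w else 0)"
    by (rule sum.swap)
  also have "\<dots> = (\<Sum>i<Suc m. (-1) ^ i * (\<Sum>a\<in>{1..n} - set u. h (ins i a u)))"
  proof (rule sum.cong[OF refl])
    fix i assume "i \<in> {..<Suc m}"
    then have "i \<le> m" by simp
    then show "(\<Sum>w\<in>inj_words n (Suc m). if del_pos i w = u then (-1) ^ i * h w else 0) =
        (-1) ^ i * (\<Sum>a\<in>{1..n} - set u. h (ins i a u))"
      using bd_inner[OF u, of i "\<lambda>w. (-1) ^ i * h w"] by (simp add: sum_distrib_left)
  qed
  finally show ?thesis .
qed

lemma dsplit:
  fixes H :: "nat \<Rightarrow> nat \<Rightarrow> complex"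
  shows "(\<Sum>k<m. \<Sum>l<m. H k l) = (\<Sum>k<m. H k k) + (\<Sum>k<m. \<Sum>l<k. H k l + H l k)"
proof (induction m)
  case 0 then show ?case by simp
next
  case (Suc m)
  have "(\<Sum>k<Suc m. \<Sum>l<Suc m. H k l) = (\<Sum>k<m. \<Sum>l<m. H k l) + (\<Sum>k<m. H k m) + (\<Sum>l<m. H m l) + H m m"
    by (simp add: sum.distrib)
  also have "\<dots> = (\<Sum>k<Suc m. H k k) + (\<Sum>k<Suc m. \<Sum>l<k. H k l + H l k)"
    using Suc by (simp add: sum.distrib)
  finally show ?case .
qed

lemma sum_neg2:
  fixes X Y :: "nat \<Rightarrow> complex"
  shows "(\<Sum>i<r. - (X i + 2 * Y i)) = - (\<Sum>i<r. X i) - 2 * (\<Sum>i<r. Y i)"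
  by (simp add: sum_negf sum.distrib sum_distrib_left sum_subtractf)

lemma core_identity:
  fixes F :: "'a list \<Rightarrow> complex"
  assumes lx: "length x = r"
  shows "(\<Sum>k<Suc r. \<Sum>l<Suc r. (-1) ^ (k + l) * F (del_pos l (ins k a x)))
       + (\<Sum>j<r. \<Sum>i<r. (-1) ^ (j + i) * F (ins i a (del_pos j x)))
       = of_nat (Suc r) * F x - (\<Sum>j<r. F (x[j := a]))"
proof -
  define H where "H k l = (-1) ^ (k + l) * F (del_pos l (ins k a x))" for k l
  define G where "G i j = (-1) ^ (i + j) * F (ins i a (del_pos j x))" for i j
  have Hkk: "H k k = F x" if "k < Suc r" for k
  proof -
    have "(-1::complex) ^ (k + k) = 1" by (simp flip: mult_2)
    then show ?thesis unfolding H_def using that lx by simp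
  qed
  have H1: "H (Suc i) l = - G i l" if "l \<le> i" "i < r" for i l
    unfolding H_def G_def using del_ins_lt[of l i x a] that lx by simp
  have H2: "H l (Suc i) = - G l i" if "l \<le> i" "i < r" for i l
    unfolding H_def G_def using del_ins_gt[of l i x a] that lx by simp
  have Gii: "G i i = F (x[i := a])" if "i < r" for i
  proof -
    have "(-1::complex) ^ (i + i) = 1" by (simp flip: mult_2)
    then show ?thesis unfolding G_def using that lx ins_del[of i x a] by simp
  qed
  have "(\<Sum>k<Suc r. \<Sum>l<Suc r. H k l) = (\<Sum>k<Suc r. H k k) + (\<Sum>k<Suc r. \<Sum>l<k. H k l + H l k)"
    by (rule dsplit)
  also have "(\<Sum>k<Suc r. H k k) = of_nat (Suc r) * F x"
    using Hkk by simp
  also have "(\<Sum>k<Suc r. \<Sum>l<k. H k l + H l k) = (\<Sum>i<r. \<Sum>l<Suc i. H (Suc i) l + H l (Suc i))"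
    by (simp only: sum.lessThan_Suc_shift) simp
  also have "\<dots> = (\<Sum>i<r. - ((\<Sum>l<i. G i l + G l i) + 2 * G i i))"
  proof (rule sum.cong[OF refl])
    fix i assume i: "i \<in> {..<r}"
    have "(\<Sum>l<Suc i. H (Suc i) l + H l (Suc i)) = (\<Sum>l<Suc i. - (G i l + G l i))"
      using H1 H2 i by (intro sum.cong refl) auto
    also have "\<dots> = - (\<Sum>l<Suc i. G i l + G l i)"
      by (rule sum_negf)
    also have "\<dots> = - ((\<Sum>l<i. G i l + G l i) + 2 * G i i)"
      by simp
    finally show "(\<Sum>l<Suc i. H (Suc i) l + H l (Suc i)) = - ((\<Sum>l<i. G i l + G l i) + 2 * G i i)" .
  qed
  finally have A: "(\<Sum>k<Suc r. \<Sum>l<Suc r. H k l) = of_nat (Suc r) * F x + (\<Sum>i<r. - ((\<Sum>l<i. G i l + G l i) + 2 * G i i))" .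
  have B: "(\<Sum>j<r. \<Sum>i<r. G i j) = (\<Sum>k<r. G k k) + (\<Sum>k<r. \<Sum>l<k. G l k + G k l)"
    by (rule dsplit)
  define P where "P = (\<Sum>i<r. \<Sum>l<i. G i l + G l i)"
  define Q where "Q = (\<Sum>k<r. G k k)"
  have C: "(\<Sum>i<r. - ((\<Sum>l<i. G i l + G l i) + 2 * G i i)) = - P - 2 * Q"
    unfolding P_def Q_def by (rule sum_neg2)
  have D: "(\<Sum>k<r. \<Sum>l<k. G l k + G k l) = P"
    unfolding P_def by (simp add: add.commute)
  have "(\<Sum>k<Suc r. \<Sum>l<Suc r. H k l) + (\<Sum>j<r. \<Sum>i<r. G i j) = of_nat (Suc r) * F x - (\<Sum>k<r. G k k)"
    unfolding A B C D Q_def[symmetric] by simp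
  also have "(\<Sum>k<r. G k k) = (\<Sum>j<r. F (x[j := a]))" using Gii by simp
  finally show ?thesis unfolding H_def G_def by (simp add: add.commute)
qed

lemma T2_eq:
  assumes x: "x \<in> inj_words n r"
  shows "bd n (Suc r) (cobd n r f) x =
    (\<Sum>a\<in>{1..n} - set x. \<Sum>k<Suc r. \<Sum>l<Suc r. (-1) ^ (k + l) * f (del_pos l (ins k a x)))"
proof -
  have "bd n (Suc r) (cobd n r f) x = (\<Sum>k<Suc r. (-1) ^ k * (\<Sum>a\<in>{1..n} - set x. cobd n r f (ins k a x)))"
    by (rule bd_eq[OF x])
  also have "\<dots> = (\<Sum>k<Suc r. (-1) ^ k * (\<Sum>a\<in>{1..n} - set x. \<Sum>l<Suc r. (-1) ^ l * f (del_pos l (ins k a x))))"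
  proof (intro sum.cong refl arg_cong2[where f = "(*)"])
    fix k a assume "k \<in> {..<Suc r}" "a \<in> {1..n} - set x"
    then have "ins k a x \<in> inj_words n (Suc r)" using ins_W[OF x] by simp
    then show "cobd n r f (ins k a x) = (\<Sum>l<Suc r. (-1) ^ l * f (del_pos l (ins k a x)))"
      by (rule cobd_eq)
  qed
  also have "\<dots> = (\<Sum>k<Suc r. \<Sum>a\<in>{1..n} - set x. \<Sum>l<Suc r. (-1) ^ (k + l) * f (del_pos l (ins k a x)))"
    by (intro sum.cong refl) (simp add: sum_distrib_left power_add mult.assoc del: sum.lessThan_Suc)
  also have "\<dots> = (\<Sum>a\<in>{1..n} - set x. \<Sum>k<Suc r. \<Sum>l<Suc r. (-1) ^ (k + l) * f (del_pos l (ins k a x)))"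
    by (rule sum.swap)
  finally show ?thesis .
qed

lemma T1_eq:
  assumes x: "x \<in> inj_words n r"
  shows "(if r = 0 then 0 else cobd n (r - 1) (bd n r f) x) =
    (\<Sum>j<r. \<Sum>i<r. (-1) ^ (j + i) * f (move_letter j i x))
    + (\<Sum>a\<in>{1..n} - set x. \<Sum>j<r. \<Sum>i<r. (-1) ^ (j + i) * f (ins i a (del_pos j x)))"
proof (cases r)
  case 0
  then show ?thesis by simp
next
  case (Suc r')
  let ?A = "{1..n} - set x"
  have lx: "length x = r" and dx: "distinct x" and sx: "set x \<subseteq> {1..n}"
    using x unfolding inj_words_def by auto
  have x': "x \<in> inj_words n (Suc r')" using x Suc by simp
  have "cobd n (r - 1) (bd n r f) x = (\<Sum>j<Suc r'. (-1) ^ j * bd n (Suc r') f (del_pos j x))"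
    using cobd_eq[OF x'] Suc by simp
  also have "\<dots> = (\<Sum>j<r. (-1) ^ j * (\<Sum>i<r. (-1) ^ i * (f (move_letter j i x)
      + (\<Sum>a\<in>?A. f (ins i a (del_pos j x))))))"
  proof (rule sum.cong)
    show "{..<Suc r'} = {..<r}" using Suc by simp
  next
    fix j assume j: "j \<in> {..<r}"
    have dW: "del_pos j x \<in> inj_words n r'" using del_W[OF x'] j Suc by simp
    have "bd n (Suc r') f (del_pos j x) = (\<Sum>i<Suc r'. (-1) ^ i * (\<Sum>a\<in>{1..n} - set (del_pos j x). f (ins i a (del_pos j x))))"
      by (rule bd_eq[OF dW])
    also have "\<dots> = (\<Sum>i<r. (-1) ^ i * (f (move_letter j i x) + (\<Sum>a\<in>?A. f (ins i a (del_pos j x)))))"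
    proof (rule sum.cong)
      show "{..<Suc r'} = {..<r}" using Suc by simp
    next
      fix i assume i: "i \<in> {..<r}"
      have jl: "j < length x" using j lx by simp
      have e: "{1..n} - set (del_pos j x) = insert (x ! j) ?A"
        using set_del_distinct[OF dx jl] sx jl nth_mem[OF jl] by auto
      have "x ! j \<notin> ?A" using jl by simp
      then have "(\<Sum>a\<in>{1..n} - set (del_pos j x). f (ins i a (del_pos j x))) =
          f (ins i (x ! j) (del_pos j x)) + (\<Sum>a\<in>?A. f (ins i a (del_pos j x)))"
        unfolding e by simp
      then show "(-1) ^ i * (\<Sum>a\<in>{1..n} - set (del_pos j x). f (ins i a (del_pos j x))) =
          (-1) ^ i * (f (move_letter j i x) + (\<Sum>a\<in>?A. f (ins i a (del_pos j x))))"
        by (simp add: move_eq)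
    qed
    finally show "(-1) ^ j * bd n (Suc r') f (del_pos j x) = (-1) ^ j * (\<Sum>i<r. (-1) ^ i * (f (move_letter j i x)
      + (\<Sum>a\<in>?A. f (ins i a (del_pos j x)))))" by simp
  qed
  also have "\<dots> = (\<Sum>j<r. \<Sum>i<r. (-1) ^ (j + i) * f (move_letter j i x))
      + (\<Sum>j<r. \<Sum>i<r. \<Sum>a\<in>?A. (-1) ^ (j + i) * f (ins i a (del_pos j x)))"
    by (simp add: sum_distrib_left sum.distrib power_add algebra_simps)
  also have "(\<Sum>j<r. \<Sum>i<r. \<Sum>a\<in>?A. (-1) ^ (j + i) * f (ins i a (del_pos j x)))
      = (\<Sum>j<r. \<Sum>a\<in>?A. \<Sum>i<r. (-1) ^ (j + i) * f (ins i a (del_pos j x)))"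
    by (rule sum.cong[OF refl], rule sum.swap)
  also have "\<dots> = (\<Sum>a\<in>?A. \<Sum>j<r. \<Sum>i<r. (-1) ^ (j + i) * f (ins i a (del_pos j x)))"
    by (rule sum.swap)
  finally show ?thesis using Suc by simp
qed


lemma lap_formula1:
  assumes x: "x \<in> inj_words n r"
  shows "laplacian n r f x = (\<Sum>j<r. \<Sum>i<r. (-1) ^ (j + i) * f (move_letter j i x))
     + of_nat ((n - r) * Suc r) * f x - (\<Sum>a\<in>{1..n} - set x. \<Sum>j<r. f (x[j := a]))"
proof -
  let ?A = "{1..n} - set x"
  have lx: "length x = r" and dx: "distinct x" and sx: "set x \<subseteq> {1..n}"
    using x unfolding inj_words_def by auto
  have cA: "card ?A = n - r"
    using sx dx lx by (simp add: card_Diff_subset distinct_card)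
  have "laplacian n r f x = (\<Sum>j<r. \<Sum>i<r. (-1) ^ (j + i) * f (move_letter j i x))
    + (\<Sum>a\<in>?A. \<Sum>j<r. \<Sum>i<r. (-1) ^ (j + i) * f (ins i a (del_pos j x)))
    + (\<Sum>a\<in>?A. \<Sum>k<Suc r. \<Sum>l<Suc r. (-1) ^ (k + l) * f (del_pos l (ins k a x)))"
    unfolding laplacian_def using T1_eq[OF x, of f] T2_eq[OF x, of f] by simp
  also have "\<dots> = (\<Sum>j<r. \<Sum>i<r. (-1) ^ (j + i) * f (move_letter j i x))
    + (\<Sum>a\<in>?A. of_nat (Suc r) * f x - (\<Sum>j<r. f (x[j := a])))"
    using core_identity[OF lx, of f] by (simp add: add.assoc sum.distrib[symmetric] add.commute)
  also have "(\<Sum>a\<in>?A. of_nat (Suc r) * f x - (\<Sum>j<r. f (x[j := a]))) =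
      (\<Sum>a\<in>?A. of_nat (Suc r) * f x) - (\<Sum>a\<in>?A. \<Sum>j<r. f (x[j := a]))"
    by (rule sum_subtractf)
  also have "(\<Sum>a\<in>?A. of_nat (Suc r) * f x) = of_nat (n - r) * (of_nat (Suc r) * f x)"
    using cA by simp
  also have "\<dots> = of_nat ((n - r) * Suc r) * f x"
    by (simp only: of_nat_mult mult.assoc)
  finally show ?thesis by (simp only: add_diff_eq)
qed

lemma dsplit1:
  fixes H :: "nat \<Rightarrow> nat \<Rightarrow> complex"
  shows "(\<Sum>k\<in>{1..m}. \<Sum>l\<in>{1..m}. H k l) = (\<Sum>k\<in>{1..m}. H k k) + (\<Sum>k\<in>{1..m}. \<Sum>l\<in>{1..<k}. H k l + H l k)"
proof (induction m)
  case 0 then show ?case by simp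
next
  case (Suc m)
  have e: "{1..Suc m} = insert (Suc m) {1..m}" by auto
  have e2: "{1..<Suc m} = {1..m}" by auto
  have "(\<Sum>k\<in>{1..Suc m}. \<Sum>l\<in>{1..Suc m}. H k l) = (\<Sum>k\<in>{1..m}. \<Sum>l\<in>{1..m}. H k l) + (\<Sum>k\<in>{1..m}. H k (Suc m)) + (\<Sum>l\<in>{1..m}. H (Suc m) l) + H (Suc m) (Suc m)"
    unfolding e by (simp add: sum.distrib)
  also have "\<dots> = (\<Sum>k\<in>{1..Suc m}. H k k) + (\<Sum>k\<in>{1..Suc m}. \<Sum>l\<in>{1..<k}. H k l + H l k)"
    using Suc unfolding e by (simp add: sum.distrib atLeastLessThanSuc_atLeastAtMost del: sum.op_ivl_Suc)
  finally show ?case .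
qed

lemma full_L:
  assumes x: "x \<in> inj_words n r"
  shows "(\<Sum>a\<in>{1..n}. \<Sum>b\<in>{1..n}. f (map (tr a b) x)) = 2 * Lop n r n f x + of_nat n * f x"
proof -
  have "(\<Sum>a\<in>{1..n}. \<Sum>b\<in>{1..n}. f (map (tr a b) x)) =
      (\<Sum>k\<in>{1..n}. f (map (tr k k) x)) + (\<Sum>k\<in>{1..n}. \<Sum>l\<in>{1..<k}. f (map (tr k l) x) + f (map (tr l k) x))"
    by (rule dsplit1)
  also have "(\<Sum>k\<in>{1..n}. f (map (tr k k) x)) = of_nat n * f x" by simp
  also have "(\<Sum>k\<in>{1..n}. \<Sum>l\<in>{1..<k}. f (map (tr k l) x) + f (map (tr l k) x)) =
      2 * (\<Sum>k\<in>{1..n}. \<Sum>l\<in>{1..<k}. f (map (tr l k) x))"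
    by (simp add: tr_sym[of _ "_::nat"] sum_distrib_left)
  also have "(\<Sum>k\<in>{1..n}. \<Sum>l\<in>{1..<k}. f (map (tr l k) x)) = Lop n r n f x"
    using x by (simp add: Lop_eq Xop_eq)
  finally show ?thesis by simp
qed

lemma sum_set_nth:
  assumes "distinct x"
  shows "(\<Sum>a\<in>set x. g a) = (\<Sum>i<length x. g (x ! i))"
  using sum.reindex_bij_betw[OF bij_betw_nth[OF assms refl refl], of g] by simp

lemma full_split:
  assumes x: "x \<in> inj_words n r"
  shows "(\<Sum>a\<in>{1..n}. \<Sum>b\<in>{1..n}. f (map (tr a b) x)) =
    Top n r f x + 2 * (\<Sum>a\<in>{1..n} - set x. \<Sum>j<r. f (x[j := a])) + of_nat ((n - r) * (n - r)) * f x"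
proof -
  let ?A = "{1..n} - set x" and ?S = "set x"
  have lx: "length x = r" and dx: "distinct x" and sx: "set x \<subseteq> {1..n}"
    using x unfolding inj_words_def by auto
  have cA: "card ?A = n - r"
    using sx dx lx by (simp add: card_Diff_subset distinct_card)
  have un: "{1..n} = ?S \<union> ?A" using sx by auto
  have dj: "?S \<inter> ?A = {}" by auto
  have split: "(\<Sum>a\<in>{1..n}. g a) = (\<Sum>a\<in>?S. g a) + (\<Sum>a\<in>?A. g a)" for g :: "nat \<Rightarrow> complex"
    using sum.subset_diff[OF sx, of g] by (simp add: add.commute)
  define R where "R = (\<Sum>a\<in>?A. \<Sum>j<r. f (x[j := a]))"
  have SS: "(\<Sum>a\<in>?S. \<Sum>b\<in>?S. f (map (tr a b) x)) = Top n r f x"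
  proof -
    have "(\<Sum>a\<in>?S. \<Sum>b\<in>?S. f (map (tr a b) x)) = (\<Sum>i<r. \<Sum>j<r. f (map (tr (x ! i) (x ! j)) x))"
      by (simp only: sum_set_nth[OF dx] lx)
    also have "\<dots> = (\<Sum>i<r. \<Sum>j<r. f (swp i j x))"
      using swp_tr[OF dx] lx by simp
    also have "\<dots> = Top n r f x"
      using x unfolding Top_def wop_def by (simp add: sum.cartesian_product')
    finally show ?thesis .
  qed
  have SA: "(\<Sum>a\<in>?S. \<Sum>b\<in>?A. f (map (tr a b) x)) = R"
  proof -
    have "(\<Sum>a\<in>?S. \<Sum>b\<in>?A. f (map (tr a b) x)) = (\<Sum>i<r. \<Sum>b\<in>?A. f (map (tr (x ! i) b) x))"
      by (simp only: sum_set_nth[OF dx] lx)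
    also have "\<dots> = (\<Sum>i<r. \<Sum>b\<in>?A. f (x[i := b]))"
      using repl_tr[OF dx] lx by (intro sum.cong refl) auto
    also have "\<dots> = R" unfolding R_def by (rule sum.swap)
    finally show ?thesis .
  qed
  have AS: "(\<Sum>a\<in>?A. \<Sum>b\<in>?S. f (map (tr a b) x)) = R"
  proof -
    have "(\<Sum>a\<in>?A. \<Sum>b\<in>?S. f (map (tr a b) x)) = (\<Sum>b\<in>?S. \<Sum>a\<in>?A. f (map (tr b a) x))"
      by (subst sum.swap) (simp add: tr_sym[of _ "_::nat"])
    then show ?thesis using SA by simp
  qed
  have AA: "(\<Sum>a\<in>?A. \<Sum>b\<in>?A. f (map (tr a b) x)) = of_nat ((n - r) * (n - r)) * f x"
  proof -
    have "(\<Sum>a\<in>?A. \<Sum>b\<in>?A. f (map (tr a b) x)) = (\<Sum>a\<in>?A. \<Sum>b\<in>?A. f x)"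
      using tr_notin by (intro sum.cong refl) auto
    then show ?thesis using cA by simp
  qed
  have "(\<Sum>a\<in>{1..n}. \<Sum>b\<in>{1..n}. f (map (tr a b) x)) =
      (\<Sum>a\<in>?S. \<Sum>b\<in>?S. f (map (tr a b) x)) + (\<Sum>a\<in>?A. \<Sum>b\<in>?S. f (map (tr a b) x))
      + ((\<Sum>a\<in>?S. \<Sum>b\<in>?A. f (map (tr a b) x)) + (\<Sum>a\<in>?A. \<Sum>b\<in>?A. f (map (tr a b) x)))"
    by (simp only: split sum.distrib)
  also have "\<dots> = Top n r f x + 2 * R + of_nat ((n - r) * (n - r)) * f x"
    unfolding SS SA AS AA by simp
  finally show ?thesis unfolding R_def .
qed

lemma lap_outside:
  assumes "x \<notin> inj_words n r"
  shows "laplacian n r f x = 0"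
  using assms unfolding laplacian_def cobd_def bd_def by auto

definition C1 :: "nat \<Rightarrow> nat \<Rightarrow> complex" where
  "C1 n r = of_nat ((n - r) * Suc r) + (of_nat ((n - r) * (n - r)) - of_nat n) / 2"

lemma lap_formula:
  assumes f: "supp (inj_words n r) f"
  shows "laplacian n r f = (\<lambda>x. Uop n r f x + (1/2) * Top n r f x - Lop n r n f x + C1 n r * f x)"
proof
  fix x
  show "laplacian n r f x = Uop n r f x + (1/2) * Top n r f x - Lop n r n f x + C1 n r * f x"
  proof (cases "x \<in> inj_words n r")
    case True
    define R where "R = (\<Sum>a\<in>{1..n} - set x. \<Sum>j<r. f (x[j := a]))"
    have U: "Uop n r f x = (\<Sum>j<r. \<Sum>i<r. (-1) ^ (j + i) * f (move_letter j i x))"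
      using True unfolding Uop_def wop_def by (simp add: sum.cartesian_product')
    have l1: "laplacian n r f x = Uop n r f x + of_nat ((n - r) * Suc r) * f x - R"
      unfolding U R_def by (rule lap_formula1[OF True])
    have "2 * Lop n r n f x + of_nat n * f x = Top n r f x + 2 * R + of_nat ((n - r) * (n - r)) * f x"
      using full_L[OF True, of f] full_split[OF True, of f] unfolding R_def by simp
    then have "R = Lop n r n f x + (of_nat n * f x - Top n r f x - of_nat ((n - r) * (n - r)) * f x) / 2"
      by algebra
    then have "laplacian n r f x = Uop n r f x + of_nat ((n - r) * Suc r) * f x -
        (Lop n r n f x + (of_nat n * f x - Top n r f x - of_nat ((n - r) * (n - r)) * f x) / 2)"
      using l1 by simp
    also have "\<dots> = Uop n r f x + (1/2) * Top n r f x - Lop n r n f x + C1 n r * f x"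
      unfolding C1_def by (simp add: field_simps)
    finally show ?thesis .
  next
    case False
    then show ?thesis using f lap_outside[OF False]
      by (simp add: supp_def Uop_def Top_def Lop_def wop_def)
  qed
qed


lemma lin_Uop: "lin (Uop n r)" unfolding Uop_def by (rule lin_wop)
lemma lin_Top: "lin (Top n r)" unfolding Top_def by (rule lin_wop)
lemma supp_Uop: "supp (inj_words n r) (Uop n r f)" unfolding Uop_def by (rule supp_wop)
lemma supp_Top: "supp (inj_words n r) (Top n r f)" unfolding Top_def by (rule supp_wop)

lemma lin_comb4:
  assumes "lin Y"
  shows "Y (\<lambda>x. f1 x + k1 * f2 x - f3 x + k2 * f4 x) = (\<lambda>x. Y f1 x + k1 * Y f2 x - Y f3 x + k2 * Y f4 x)"
proof -
  have "Y (\<lambda>x. f1 x + k1 * f2 x - f3 x + k2 * f4 x) = (\<lambda>x. Y (\<lambda>x. f1 x + k1 * f2 x - f3 x) x + Y (\<lambda>x. k2 * f4 x) x)"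
    by (rule lin_add[OF assms])
  also have "Y (\<lambda>x. f1 x + k1 * f2 x - f3 x) = (\<lambda>x. Y (\<lambda>x. f1 x + k1 * f2 x) x - Y f3 x)"
    by (rule lin_diff[OF assms])
  also have "Y (\<lambda>x. f1 x + k1 * f2 x) = (\<lambda>x. Y f1 x + Y (\<lambda>x. k1 * f2 x) x)"
    by (rule lin_add[OF assms])
  also have "Y (\<lambda>x. k1 * f2 x) = (\<lambda>x. k1 * Y f2 x)" by (rule lin_smult[OF assms])
  also have "Y (\<lambda>x. k2 * f4 x) = (\<lambda>x. k2 * Y f4 x)" by (rule lin_smult[OF assms])
  finally show ?thesis .
qed

lemma lin_comb2:
  assumes "lin Y"
  shows "Y (\<lambda>x. f1 x + k1 * f2 x) = (\<lambda>x. Y f1 x + k1 * Y f2 x)"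
  using lin_add[OF assms, of f1 "\<lambda>x. k1 * f2 x"] lin_smult[OF assms, of k1 f2] by simp

lemma Lop_Uop: "r \<le> n \<Longrightarrow> m \<le> n \<Longrightarrow> Lop n r m (Uop n r f) = Uop n r (Lop n r m f)"
  unfolding Lop_def Uop_def
proof (rule wop_comm)
  fix i x assume "i \<in> Sigma {1..m} (\<lambda>k. {1..<k})" "x \<in> inj_words n r" "m \<le> n"
  then show "(case i of (k, i) \<Rightarrow> map (tr i k)) x \<in> inj_words n r"
    using map_tr_W by (auto split: prod.splits)
next
  fix j x assume "j \<in> {..<r} \<times> {..<r}" "x \<in> inj_words n r"
  then show "(case j of (u, v) \<Rightarrow> move_letter u v) x \<in> inj_words n r"
    using move_W by (auto split: prod.splits)
next
  fix i j x assume "i \<in> Sigma {1..m} (\<lambda>k. {1..<k})" "j \<in> {..<r} \<times> {..<r}" "x \<in> inj_words n r"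
  then show "(case i of (k, i) \<Rightarrow> map (tr i k)) ((case j of (u, v) \<Rightarrow> move_letter u v) x) =
       (case j of (u, v) \<Rightarrow> move_letter u v) ((case i of (k, i) \<Rightarrow> map (tr i k)) x)"
    using map_move unfolding inj_words_def by (auto split: prod.splits)
qed

lemma Lop_Top: "r \<le> n \<Longrightarrow> m \<le> n \<Longrightarrow> Lop n r m (Top n r f) = Top n r (Lop n r m f)"
  unfolding Lop_def Top_def
proof (rule wop_comm)
  fix i x assume "i \<in> Sigma {1..m} (\<lambda>k. {1..<k})" "x \<in> inj_words n r" "m \<le> n"
  then show "(case i of (k, i) \<Rightarrow> map (tr i k)) x \<in> inj_words n r"
    using map_tr_W by (auto split: prod.splits)
next
  fix j x assume "j \<in> {..<r} \<times> {..<r}" "x \<in> inj_words n r"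
  then show "(case j of (i, j) \<Rightarrow> swp i j) x \<in> inj_words n r"
    using swp_W by (auto split: prod.splits)
next
  fix i j x assume "i \<in> Sigma {1..m} (\<lambda>k. {1..<k})" "j \<in> {..<r} \<times> {..<r}" "x \<in> inj_words n r"
  then show "(case i of (k, i) \<Rightarrow> map (tr i k)) ((case j of (i, j) \<Rightarrow> swp i j) x) =
       (case j of (i, j) \<Rightarrow> swp i j) ((case i of (k, i) \<Rightarrow> map (tr i k)) x)"
    using map_swp unfolding inj_words_def by (auto split: prod.splits)
qed

definition Pop :: "nat \<Rightarrow> nat \<Rightarrow> (nat list \<Rightarrow> complex) \<Rightarrow> nat list \<Rightarrow> complex" where
  "Pop n r f = (\<lambda>x. Uop n r f x + (1/2) * Top n r f x)"

definition Lam :: "nat \<Rightarrow> nat \<Rightarrow> (nat list \<Rightarrow> complex) \<Rightarrow> nat list \<Rightarrow> complex" where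
  "Lam n r f = (\<lambda>x. Uop n r f x + (1/2) * Top n r f x - Lop n r n f x + C1 n r * f x)"

lemma lin_Pop: "lin (Pop n r)"
  unfolding lin_def Pop_def
  using lin_add[OF lin_Uop] lin_smult[OF lin_Uop] lin_add[OF lin_Top] lin_smult[OF lin_Top]
  by (simp add: algebra_simps)

lemma lin_Lam: "lin (Lam n r)"
  unfolding lin_def Lam_def
  using lin_add[OF lin_Uop] lin_smult[OF lin_Uop] lin_add[OF lin_Top] lin_smult[OF lin_Top]
    lin_add[OF lin_Lop] lin_smult[OF lin_Lop]
  by (simp add: algebra_simps)

lemma Lop_Lam:
  assumes "r \<le> n" "supp (inj_words n r) f"
  shows "Lop n r n (Lam n r f) = Lam n r (Lop n r n f)"
  unfolding Lam_def lin_comb4[OF lin_Lop] Lop_Uop[OF assms(1) order.refl] Lop_Top[OF assms(1) order.refl] ..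

lemma Lop_Pop:
  assumes "r \<le> n" "m \<le> n"
  shows "Lop n r m (Pop n r f) = Pop n r (Lop n r m f)"
  unfolding Pop_def lin_comb2[OF lin_Lop] Lop_Uop[OF assms] Lop_Top[OF assms] ..

lemma upsilon_eq:
  assumes p: "p \<in> inj_words r r"
  shows "upsilon_op r f p = (\<Sum>u<r. \<Sum>v<r. f (move_letter v u p))"
proof -
  let ?S = "inj_words r r"
  have lp: "length p = r" using p unfolding inj_words_def by simp
  have "upsilon_op r f p = (\<Sum>w\<in>?S. \<Sum>u<r. \<Sum>v<r. if move_letter u v w = p then f w else 0)"
    using p unfolding upsilon_op_def by simp
  also have "\<dots> = (\<Sum>u<r. \<Sum>w\<in>?S. \<Sum>v<r. if move_letter u v w = p then f w else 0)"
    by (rule sum.swap)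
  also have "\<dots> = (\<Sum>u<r. \<Sum>v<r. \<Sum>w\<in>?S. if move_letter u v w = p then f w else 0)"
    by (rule sum.cong[OF refl], rule sum.swap)
  also have "\<dots> = (\<Sum>u<r. \<Sum>v<r. f (move_letter v u p))"
  proof (intro sum.cong refl)
    fix u v assume u: "u \<in> {..<r}" and v: "v \<in> {..<r}"
    have "(\<Sum>w\<in>?S. if move_letter u v w = p then f w else 0) = (\<Sum>w\<in>?S. if w = move_letter v u p then f w else 0)"
    proof (rule sum.cong[OF refl])
      fix w assume w: "w \<in> ?S"
      have lw: "length w = r" using w unfolding inj_words_def by simp
      have "move_letter u v w = p \<longleftrightarrow> w = move_letter v u p"
        using move_inv[of u w v] move_inv[of v p u] u v lw lp by auto
      then show "(if move_letter u v w = p then f w else 0) = (if w = move_letter v u p then f w else 0)"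
        by simp
    qed
    also have "\<dots> = f (move_letter v u p)"
      using move_W[of v r p r u] u v p inj_words_finite by simp
    finally show "(\<Sum>w\<in>?S. if move_letter u v w = p then f w else 0) = f (move_letter v u p)" .
  qed
  finally show ?thesis .
qed


lemma sign_twist:
  assumes h: "supp (inj_words r r) h" "h \<noteq> (\<lambda>_. 0)" "Uop r r h = (\<lambda>x. \<alpha> * h x)"
  shows "is_eigenvalue (inj_words r r) (upsilon_op r) \<alpha>"
proof -
  let ?S = "inj_words r r"
  define g where "g p = sgnw p * h p" for p
  have gs: "\<forall>x. x \<notin> ?S \<longrightarrow> g x = 0" using h(1) unfolding g_def supp_def by simp
  obtain x1 where "h x1 \<noteq> 0" using h(2) by auto
  then have "g x1 \<noteq> 0" unfolding g_def using sgnw_nonzero by simp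
  then have gn: "g \<noteq> (\<lambda>_. 0)" by auto
  have "upsilon_op r g = (\<lambda>x. \<alpha> * g x)"
  proof
    fix p
    show "upsilon_op r g p = \<alpha> * g p"
    proof (cases "p \<in> ?S")
      case True
      have lp: "length p = r" and dp: "distinct p" using True unfolding inj_words_def by auto
      have "upsilon_op r g p = (\<Sum>u<r. \<Sum>v<r. sgnw (move_letter v u p) * h (move_letter v u p))"
        using upsilon_eq[OF True] unfolding g_def by simp
      also have "\<dots> = (\<Sum>u<r. \<Sum>v<r. sgnw p * ((-1) ^ (v + u) * h (move_letter v u p)))"
        using sgnw_move[OF dp] lp by (intro sum.cong refl) (simp add: mult.assoc)
      also have "\<dots> = sgnw p * (\<Sum>u<r. \<Sum>v<r. (-1) ^ (v + u) * h (move_letter v u p))"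
        by (simp add: sum_distrib_left)
      also have "(\<Sum>u<r. \<Sum>v<r. (-1) ^ (v + u) * h (move_letter v u p)) = (\<Sum>v<r. \<Sum>u<r. (-1) ^ (v + u) * h (move_letter v u p))"
        by (rule sum.swap)
      also have "\<dots> = Uop r r h p"
        using True unfolding Uop_def wop_def by (simp add: sum.cartesian_product')
      also have "\<dots> = \<alpha> * h p" using h(3) by simp
      finally show ?thesis unfolding g_def by simp
    next
      case False
      then show ?thesis using gs unfolding upsilon_op_def by simp
    qed
  qed
  then show ?thesis unfolding is_eigenvalue_def using gs gn by blast
qed

lemma Top_S:
  assumes p: "p \<in> inj_words r r"
  shows "Top r r f p = 2 * Lop r r r f p + of_nat r * f p"
proof -
  have lp: "length p = r" and dp: "distinct p" and sp0: "set p \<subseteq> {1..r}"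
    using p unfolding inj_words_def by auto
  have "card (set p) = card {1..r}" using distinct_card[OF dp] lp by simp
  then have sp: "set p = {1..r}" using card_subset_eq[OF _ sp0] by simp
  show ?thesis using full_L[OF p, of f] full_split[OF p, of f] sp by simp
qed

lemma C1_int:
  assumes "r \<le> n"
  shows "C1 n r + of_nat r / 2 \<in> \<int>"
proof -
  define m where "m = n - r"
  have n: "n = m + r" using assms unfolding m_def by simp
  have "even (m * (m - 1))" by (cases "even m") auto
  then obtain q where q: "m * (m - 1) = 2 * q" by (elim evenE)
  have e: "(of_nat (m * m) :: complex) - of_nat m = of_nat (m * (m - 1))"
    by (cases m) (simp_all add: algebra_simps)
  have "C1 n r + of_nat r / 2 = of_nat (m * Suc r) + (of_nat (m * m) - of_nat m) / 2"
    unfolding C1_def m_def[symmetric] n by (simp add: field_simps)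
  also have "\<dots> = of_nat (m * Suc r) + of_nat q" unfolding e q by simp
  also have "\<dots> = of_nat (m * Suc r + q)" by simp
  finally show ?thesis by (metis Ints_of_nat)
qed

theorem main:
  fixes n r :: nat
  assumes "r < n"
    and hyp: "\<forall>c. is_eigenvalue (inj_words r r) (upsilon_op r) c \<longrightarrow> c \<in> \<int>"
  shows "\<forall>c. is_eigenvalue (inj_words n r) (laplacian n r) c \<longrightarrow> c \<in> \<int>"
proof (intro allI impI)
  fix c
  assume "is_eigenvalue (inj_words n r) (laplacian n r) c"
  then obtain f where f0: "\<forall>x. x \<notin> inj_words n r \<longrightarrow> f x = 0" "f \<noteq> (\<lambda>_. 0)" "laplacian n r f = (\<lambda>x. c * f x)"
    unfolding is_eigenvalue_def by blast
  let ?W = "inj_words n r" and ?S = "inj_words r r"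
  have rn: "r \<le> n" using assms(1) by simp
  have fs: "supp ?W f" using f0(1) unfolding supp_def by simp
  have fL: "Lam n r f = (\<lambda>x. c * f x)" using f0(3) lap_formula[OF fs] unfolding Lam_def by simp
  have YZ: "Lop n r n (Lam n r g) = Lam n r (Lop n r n g)" if "supp ?W g" for g
    by (rule Lop_Lam[OF rn that])
  obtain w t where w: "supp ?W w" "w \<noteq> (\<lambda>_. 0)" "Lam n r w = (\<lambda>x. c * w x)" "Lop n r n w = (\<lambda>x. t * w x)"
    using common_eig[where Y = "Lop n r n" and Z = "Lam n r", OF inj_words_finite lin_Lop lin_Lam supp_Lop YZ fs f0(2) fL]
    by blast
  have ti: "t \<in> \<int>" using L_int[of n n r t] w unfolding eig_def by auto
  define \<mu> where "\<mu> = c + t - C1 n r"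
  have Pw: "Pop n r w = (\<lambda>x. \<mu> * w x)"
  proof
    fix x
    have "Lam n r w x = c * w x" using w(3) by simp
    then show "Pop n r w x = \<mu> * w x"
      using w(4) unfolding Lam_def Pop_def \<mu>_def by (simp add: algebra_simps fun_eq_iff)
  qed
  obtain x0 where x0: "w x0 \<noteq> 0" using w(2) by auto
  then have x0W: "x0 \<in> ?W" using w(1) unfolding supp_def by auto
  have lx0: "length x0 = r" and dx0: "distinct x0" and sx0: "set x0 \<subseteq> {1..n}"
    using x0W unfolding inj_words_def by auto
  define \<phi> where "\<phi> i = x0 ! (i - 1)" for i
  define g where "g p = (if p \<in> ?S then w (map \<phi> p) else 0)" for p
  have phiW: "map \<phi> p \<in> ?W" if "p \<in> ?S" for p
  proof -
    have lp: "length p = r" and dp: "distinct p" and sp: "set p \<subseteq> {1..r}"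
      using that unfolding inj_words_def by auto
    have "inj_on \<phi> (set p)"
    proof (rule inj_onI)
      fix a b assume ab: "a \<in> set p" "b \<in> set p" "\<phi> a = \<phi> b"
      then have "a \<in> {1..r}" "b \<in> {1..r}" using sp by blast+
      then have "a - 1 < r" "b - 1 < r" "x0 ! (a - 1) = x0 ! (b - 1)" "a \<ge> 1" "b \<ge> 1"
        using ab(3) unfolding \<phi>_def by auto
      then have "a - 1 = b - 1" using nth_eq_iff_index_eq[OF dx0] lx0 by simp
      then show "a = b" using \<open>a \<ge> 1\<close> \<open>b \<ge> 1\<close> by simp
    qed
    then have "distinct (map \<phi> p)" using dp by (simp add: distinct_map)
    moreover have "set (map \<phi> p) \<subseteq> {1..n}"
    proof
      fix y assume "y \<in> set (map \<phi> p)"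
      then obtain a where "a \<in> set p" "y = x0 ! (a - 1)" unfolding \<phi>_def by auto
      then have "a \<in> {1..r}" using sp by blast
      then have "a - 1 < length x0" using lx0 by auto
      then show "y \<in> {1..n}" using sx0 \<open>y = x0 ! (a - 1)\<close> nth_mem by blast
    qed
    ultimately show ?thesis using lp unfolding inj_words_def by simp
  qed
  define p0 where "p0 = [1..<Suc r]"
  have p0S: "p0 \<in> ?S" unfolding p0_def inj_words_def by auto
  have mp0: "map \<phi> p0 = x0" unfolding p0_def \<phi>_def using lx0 by (intro nth_equalityI) (auto simp del: upt_Suc)
  have gs: "supp ?S g" unfolding g_def supp_def by simp
  have gn: "g \<noteq> (\<lambda>_. 0)"
  proof
    assume "g = (\<lambda>_. 0)"
    then have "g p0 = 0" by simp
    then show False using p0S mp0 x0 unfolding g_def by simp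
  qed
  have Pg: "Pop r r g = (\<lambda>x. \<mu> * g x)"
  proof
    fix p
    show "Pop r r g p = \<mu> * g p"
    proof (cases "p \<in> ?S")
      case True
      have lp: "length p = r" using True unfolding inj_words_def by simp
      have U: "Uop r r g p = Uop n r w (map \<phi> p)"
        unfolding Uop_def g_def
        by (rule wop_transport[where \<phi> = "map \<phi>", OF True phiW[OF True]]) (auto simp: move_W[OF _ True] map_move lp)
      have T: "Top r r g p = Top n r w (map \<phi> p)"
        unfolding Top_def g_def
        by (rule wop_transport[where \<phi> = "map \<phi>", OF True phiW[OF True]]) (auto simp: swp_W[OF _ _ True] map_swp lp)
      have "Pop n r w (map \<phi> p) = \<mu> * w (map \<phi> p)" using Pw by simp
      then show ?thesis unfolding Pop_def U T g_def using True by simp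
    next
      case False
      then show ?thesis unfolding Pop_def Uop_def Top_def wop_def g_def by simp
    qed
  qed
  have YZ2: "Lop r r r (Pop r r h) = Pop r r (Lop r r r h)" if "supp ?S h" for h
    by (rule Lop_Pop) simp_all
  have lin_supp_P: "supp ?S (Pop r r h)" for h
    using supp_Uop[of r r h] supp_Top[of r r h] unfolding Pop_def supp_def by simp
  obtain h \<tau> where h: "supp ?S h" "h \<noteq> (\<lambda>_. 0)" "Pop r r h = (\<lambda>x. \<mu> * h x)" "Lop r r r h = (\<lambda>x. \<tau> * h x)"
    using common_eig[where Y = "Lop r r r" and Z = "Pop r r", OF inj_words_finite lin_Lop lin_Pop supp_Lop YZ2 gs gn Pg]
    by blast
  have taui: "\<tau> \<in> \<int>" using L_int[of r r r \<tau>] h unfolding eig_def by auto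
  define \<alpha> where "\<alpha> = \<mu> - \<tau> - of_nat r / 2"
  have Uh: "Uop r r h = (\<lambda>x. \<alpha> * h x)"
  proof
    fix p
    show "Uop r r h p = \<alpha> * h p"
    proof (cases "p \<in> ?S")
      case True
      have "Pop r r h p = \<mu> * h p" using h(3) by simp
      moreover have "Top r r h p = 2 * (\<tau> * h p) + of_nat r * h p"
        using Top_S[OF True, of h] h(4) by simp
      ultimately show ?thesis unfolding Pop_def \<alpha>_def by (simp add: field_simps)
    next
      case False
      then show ?thesis using h(1) unfolding Uop_def wop_def supp_def by simp
    qed
  qed
  have ai: "\<alpha> \<in> \<int>" using hyp sign_twist[OF h(1,2) Uh] by blast
  have "c = \<alpha> + \<tau> - t + (C1 n r + of_nat r / 2)" unfolding \<alpha>_def \<mu>_def by simp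
  moreover have "\<alpha> + \<tau> - t + (C1 n r + of_nat r / 2) \<in> \<int>"
    by (rule Ints_add[OF Ints_diff[OF Ints_add[OF ai taui] ti] C1_int[OF rn]])
  ultimately show "c \<in> \<int>" by simp
qed

theorem theorem3p3:
  fixes n r :: nat
  assumes "r < n"
    and "\<forall>c. is_eigenvalue (inj_words r r) (upsilon_op r) c \<longrightarrow> c \<in> \<int>"
  shows "\<forall>c. is_eigenvalue (inj_words n r) (laplacian n r) c \<longrightarrow> c \<in> \<int>"
  by (rule main[OF assms])

end
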